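(* If $\sigma_2(G)\le\sigma_2(H)$, then for every integer $0\le i\le s-1$, $$\sigma_2\big((I\otimes A_H)\,G_i\,(I\otimes A_H)\big)\le 2\,\sigma_2(H).$$
   Context: $G$ is a $d_1$-regular undirected graph on $[n]$ with normalized adjacency matrix $A_G$ and a locally invertible rotation map $\mathrm{rot}_G$ ($\mathrm{rot}_G(v,j)=(v',j')$ iff $v'$ is the $j$-th neighbour of $v$ and $v$ is the $j'$-th neighbour of $v'$, with $j'=\varphi(j)$ for a fixed bijection $\varphi$ of $[d_1]$). $H$ is a $d_2$-regular undirected graph on $[d_1]^s$ with normalized adjacency matrix $A_H$. $\mathrm{Rot}_i$ sends $(v,(a_0,\dots,a_{s-1}))$ to $(v',(a_0,\dots,a_i',\dots,a_{s-1}))$ where $(v',a_i')=\mathrm{rot}_G(v,a_i)$, and $G_i$ is its permutation matrix on $\mathbb R^{V(G)}\otimes\mathbb R^{V(H)}$. $\sigma_2$ denotes the second largest singular value; $\sigma_2(G)=\sigma_2(A_G)$, $\sigma_2(H)=\sigma_2(A_H)$. *)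

theory Defs
  imports "Jordan_Normal_Form.Char_Poly" "HOL-Library.Multiset"
begin

text \<open>A real square matrix with rows and columns indexed by the finite set S is a
function M :: 'a => 'a => real (only the values on S x S matter).\<close>

definition mat_mult_on :: "'a set \<Rightarrow> ('a \<Rightarrow> 'a \<Rightarrow> real) \<Rightarrow> ('a \<Rightarrow> 'a \<Rightarrow> real) \<Rightarrow> ('a \<Rightarrow> 'a \<Rightarrow> real)" where
  "mat_mult_on S M N = (\<lambda>x y. \<Sum>z\<in>S. M x z * N z y)"

text \<open>An (arbitrary) enumeration of S by 0..card S - 1, used to view M as a JNF matrix.
Spectral data do not depend on the chosen enumeration.\<close>
definition enum_on :: "'a set \<Rightarrow> nat \<Rightarrow> 'a" where
  "enum_on S = (SOME f. bij_betw f {..<card S} S)"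

definition to_mat :: "'a set \<Rightarrow> ('a \<Rightarrow> 'a \<Rightarrow> real) \<Rightarrow> real mat" where
  "to_mat S M = mat (card S) (card S) (\<lambda>(i,j). M (enum_on S i) (enum_on S j))"

definition singular_values :: "'a set \<Rightarrow> ('a \<Rightarrow> 'a \<Rightarrow> real) \<Rightarrow> real list" where
  "singular_values S M =
     (let A = to_mat S M in
      rev (sorted_list_of_multiset (image_mset sqrt (proots (char_poly (transpose_mat A * A))))))"

text \<open>Second largest singular value (0 by convention if there are fewer than two).\<close>
definition sigma2 :: "'a set \<Rightarrow> ('a \<Rightarrow> 'a \<Rightarrow> real) \<Rightarrow> real" where
  "sigma2 S M = (if length (singular_values S M) \<ge> 2 then singular_values S M ! 1 else 0)"

text \<open>A d-regular undirected (multi)graph on vertex set V given by its rotation map: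
rot v j = (w, k) means w is the j-th neighbour of v and v is the k-th neighbour of w.\<close>
definition is_rotation_map :: "'v set \<Rightarrow> nat \<Rightarrow> ('v \<Rightarrow> nat \<Rightarrow> 'v \<times> nat) \<Rightarrow> bool" where
  "is_rotation_map V d rot \<longleftrightarrow>
     (\<forall>v\<in>V. \<forall>j<d. fst (rot v j) \<in> V \<and> snd (rot v j) < d \<and>
                   rot (fst (rot v j)) (snd (rot v j)) = (v, j))"

definition locally_invertible :: "'v set \<Rightarrow> nat \<Rightarrow> ('v \<Rightarrow> nat \<Rightarrow> 'v \<times> nat) \<Rightarrow> bool" where
  "locally_invertible V d rot \<longleftrightarrow>
     (\<exists>\<phi>. bij_betw \<phi> {..<d} {..<d} \<and> (\<forall>v\<in>V. \<forall>j<d. snd (rot v j) = \<phi> j))"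

definition norm_adj :: "nat \<Rightarrow> ('v \<Rightarrow> nat \<Rightarrow> 'v \<times> nat) \<Rightarrow> 'v \<Rightarrow> 'v \<Rightarrow> real" where
  "norm_adj d rot = (\<lambda>u v. real (card {j. j < d \<and> fst (rot v j) = u}) / real d)"

text \<open>Vertex set of H: [d1]^s, tuples (a_0,...,a_{s-1}) as lists.\<close>
definition tuples :: "nat \<Rightarrow> nat \<Rightarrow> nat list set" where
  "tuples d1 s = {a. length a = s \<and> set a \<subseteq> {..<d1}}"

definition Rot_i :: "(nat \<Rightarrow> nat \<Rightarrow> nat \<times> nat) \<Rightarrow> nat \<Rightarrow> nat \<times> nat list \<Rightarrow> nat \<times> nat list" where
  "Rot_i rotG i = (\<lambda>(v, a). let (v', ai') = rotG v (a ! i) in (v', a[i := ai']))"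

definition perm_mat_Rot :: "(nat \<Rightarrow> nat \<Rightarrow> nat \<times> nat) \<Rightarrow> nat \<Rightarrow> (nat \<times> nat list) \<Rightarrow> (nat \<times> nat list) \<Rightarrow> real" where
  "perm_mat_Rot rotG i = (\<lambda>x y. if x = Rot_i rotG i y then 1 else 0)"

definition id_tensor :: "('h \<Rightarrow> 'h \<Rightarrow> real) \<Rightarrow> ('v \<times> 'h) \<Rightarrow> ('v \<times> 'h) \<Rightarrow> real" where
  "id_tensor A = (\<lambda>(v, a) (w, b). (if v = w then 1 else 0) * A a b)"

end

theory Submission
  imports Defs "HOL-Computational_Algebra.Fundamental_Theorem_Algebra"
begin


lemma real_eigen_exists:
  fixes C :: "nat \<Rightarrow> nat \<Rightarrow> real"
  assumes n: "n > 0" and sym: "\<forall>i<n. \<forall>j<n. C i j = C j i"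
  shows "\<exists>lam x. (\<forall>i<n. (\<Sum>j<n. C i j * x j) = lam * x i) \<and> (\<exists>i<n. x i \<noteq> 0)"
proof -
  define Cc where "Cc = mat n n (\<lambda>(i,j). complex_of_real (C i j))"
  have carr: "Cc \<in> carrier_mat n n" unfolding Cc_def by simp
  have "degree (char_poly Cc) = n" using degree_monic_char_poly[OF carr] by simp
  hence "\<not> constant (poly (char_poly Cc))" using n constant_degree[of "char_poly Cc"] by auto
  then obtain z where "poly (char_poly Cc) z = 0" using fundamental_theorem_of_algebra by blast
  hence "eigenvalue Cc z" using eigenvalue_root_char_poly[OF carr] by simp
  then obtain v where v: "v \<in> carrier_vec n" "v \<noteq> 0\<^sub>v n" "Cc *\<^sub>v v = z \<cdot>\<^sub>v v"
    unfolding eigenvalue_def eigenvector_def using carr by auto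
  define vc where "vc i = v $ i" for i
  have ev: "(\<Sum>j<n. complex_of_real (C i j) * vc j) = z * vc i" if i: "i < n" for i
  proof -
    have "(Cc *\<^sub>v v) $ i = (z \<cdot>\<^sub>v v) $ i" using v(3) by simp
    thus ?thesis using i v(1) unfolding Cc_def vc_def
      by (simp add: scalar_prod_def row_def atLeast0LessThan)
  qed
  have nz: "\<exists>i<n. vc i \<noteq> 0"
  proof (rule ccontr)
    assume "\<not> ?thesis"
    hence "v = 0\<^sub>v n" using v(1) unfolding vc_def by (intro eq_vecI) auto
    thus False using v(2) by simp
  qed
  define s where "s = (\<Sum>i<n. cnj (vc i) * (\<Sum>j<n. complex_of_real (C i j) * vc j))"
  define r where "r = (\<Sum>i<n. (cmod (vc i))^2)"
  have rpos: "r > 0"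
  proof -
    obtain i where i: "i < n" "vc i \<noteq> 0" using nz by blast
    have "(cmod (vc i))^2 \<le> r" unfolding r_def
      by (rule member_le_sum[of i "{..<n}" "\<lambda>i. (cmod (vc i))^2"]) (use i in auto)
    moreover have "(cmod (vc i))^2 > 0" using i by simp
    ultimately show ?thesis by linarith
  qed
  have s1: "s = z * complex_of_real r"
  proof -
    have "s = (\<Sum>i<n. cnj (vc i) * (z * vc i))" unfolding s_def using ev by (intro sum.cong) auto
    also have "\<dots> = z * (\<Sum>i<n. cnj (vc i) * vc i)" by (simp add: sum_distrib_left algebra_simps)
    also have "(\<Sum>i<n. cnj (vc i) * vc i) = (\<Sum>i<n. complex_of_real ((cmod (vc i))^2))"
      by (intro sum.cong refl) (simp add: complex_norm_square[symmetric] mult.commute)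
    also have "\<dots> = complex_of_real r" unfolding r_def by (simp add: of_real_sum)
    finally show ?thesis .
  qed
  have s2: "cnj s = s"
  proof -
    have "cnj s = (\<Sum>i<n. \<Sum>j<n. complex_of_real (C i j) * vc i * cnj (vc j))"
      unfolding s_def by (simp add: sum_distrib_left algebra_simps)
    also have "\<dots> = (\<Sum>j<n. \<Sum>i<n. complex_of_real (C i j) * vc i * cnj (vc j))"
      by (rule sum.swap)
    also have "\<dots> = (\<Sum>j<n. \<Sum>i<n. complex_of_real (C j i) * vc i * cnj (vc j))"
      using sym by (intro sum.cong refl) auto
    also have "\<dots> = s" unfolding s_def by (simp add: sum_distrib_left algebra_simps)
    finally show ?thesis .
  qed
  have imz: "Im z = 0"
  proof -
    have "Im s = 0" using arg_cong[OF s2, of Im] by simp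
    hence "Im z * r = 0" using s1 by simp
    thus ?thesis using rpos by simp
  qed
  have evR: "(\<Sum>j<n. C i j * Re (vc j)) = Re z * Re (vc i)"
    and evI: "(\<Sum>j<n. C i j * Im (vc j)) = Re z * Im (vc i)" if i: "i < n" for i
  proof -
    have "Re (\<Sum>j<n. complex_of_real (C i j) * vc j) = Re (z * vc i)" using ev[OF i] by simp
    thus "(\<Sum>j<n. C i j * Re (vc j)) = Re z * Re (vc i)" using imz by (simp add: Re_sum)
    have "Im (\<Sum>j<n. complex_of_real (C i j) * vc j) = Im (z * vc i)" using ev[OF i] by simp
    thus "(\<Sum>j<n. C i j * Im (vc j)) = Re z * Im (vc i)" using imz by (simp add: Im_sum)
  qed
  show ?thesis
  proof (cases "\<exists>i<n. Re (vc i) \<noteq> 0")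
    case True
    thus ?thesis using evR by (intro exI[of _ "Re z"] exI[of _ "\<lambda>j. Re (vc j)"]) auto
  next
    case False
    hence "\<exists>i<n. Im (vc i) \<noteq> 0" using nz complex_eqI by (metis zero_complex.sel)
    thus ?thesis using evI by (intro exI[of _ "Re z"] exI[of _ "\<lambda>j. Im (vc j)"]) auto
  qed
qed




definition dotn :: "nat \<Rightarrow> (nat \<Rightarrow> real) \<Rightarrow> (nat \<Rightarrow> real) \<Rightarrow> real" where
  "dotn n x y = (\<Sum>i<n. x i * y i)"
definition mvn :: "nat \<Rightarrow> (nat \<Rightarrow> nat \<Rightarrow> real) \<Rightarrow> (nat \<Rightarrow> real) \<Rightarrow> nat \<Rightarrow> real" where
  "mvn n C x = (\<lambda>i. \<Sum>j<n. C i j * x j)"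

lemma dotn_comm: "dotn n x y = dotn n y x"
  unfolding dotn_def by (simp add: mult.commute)

lemma dotn_cong: "(\<And>i. i < n \<Longrightarrow> x i = x' i) \<Longrightarrow> (\<And>i. i < n \<Longrightarrow> y i = y' i) \<Longrightarrow> dotn n x y = dotn n x' y'"
  unfolding dotn_def by (intro sum.cong) auto

lemma dotn_lin1: "finite B \<Longrightarrow> dotn n (\<lambda>i. \<Sum>b\<in>B. f b * g b i) y = (\<Sum>b\<in>B. f b * dotn n (g b) y)"
  unfolding dotn_def by (simp add: sum_distrib_left sum_distrib_right mult.assoc sum.swap[of _ B])

lemma dotn_lin2: "finite B \<Longrightarrow> dotn n y (\<lambda>i. \<Sum>b\<in>B. f b * g b i) = (\<Sum>b\<in>B. f b * dotn n y (g b))"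
  using dotn_lin1[of B n f g y] by (simp add: dotn_comm)

lemma dotn_scale1: "dotn n (\<lambda>i. c * x i) y = c * dotn n x y"
  unfolding dotn_def by (simp add: sum_distrib_left mult.assoc)
lemma dotn_scale2: "dotn n x (\<lambda>i. c * y i) = c * dotn n x y"
  unfolding dotn_def by (simp add: sum_distrib_left algebra_simps)

lemma mvn_lin: "finite B \<Longrightarrow> mvn n C (\<lambda>i. \<Sum>b\<in>B. f b * g b i) = (\<lambda>i. \<Sum>b\<in>B. f b * mvn n C (g b) i)"
  unfolding mvn_def by (auto simp add: sum_distrib_left algebra_simps intro!: ext sum.swap)

lemma dotn_mvn_sym:
  assumes "\<forall>i<n. \<forall>j<n. C i j = C j i"
  shows "dotn n y (mvn n C z) = dotn n z (mvn n C y)"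
proof -
  have "dotn n y (mvn n C z) = (\<Sum>i<n. \<Sum>j<n. y i * C i j * z j)"
    unfolding dotn_def mvn_def by (simp add: sum_distrib_left mult.assoc)
  also have "\<dots> = (\<Sum>j<n. \<Sum>i<n. y i * C i j * z j)" by (rule sum.swap)
  also have "\<dots> = (\<Sum>j<n. \<Sum>i<n. z j * C j i * y i)"
    using assms by (intro sum.cong refl) auto
  also have "\<dots> = dotn n z (mvn n C y)"
    unfolding dotn_def mvn_def by (simp add: sum_distrib_left mult.assoc)
  finally show ?thesis .
qed

definition ev0 :: "nat \<Rightarrow> nat \<Rightarrow> real" where "ev0 k i = (if i = k then 1 else 0)"

lemma sum_ev0: "k < n \<Longrightarrow> (\<Sum>i<n. f i * ev0 k i) = f k"
proof -
  assume k: "k < n"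
  have "(\<Sum>i<n. f i * ev0 k i) = (\<Sum>i<n. if i = k then f i else 0)"
    unfolding ev0_def by (intro sum.cong) auto
  also have "\<dots> = f k" using k by (simp add: sum.delta)
  finally show ?thesis .
qed

lemma householder:
  assumes v: "dotn n v v = 1" and n: "n > 0"
  shows "\<exists>H. (\<forall>i<n. H 0 i = v i) \<and> (\<forall>k<n. \<forall>l<n. dotn n (H k) (H l) = (if k = l then 1 else 0))
     \<and> (\<forall>k<n. \<forall>i<n. H k i = H i k)"
proof -
  define w where "w i = v i - ev0 0 i" for i
  define W where "W = dotn n w w"
  define c where "c = 2 / W"
  define H where "H k i = ev0 k i - c * w i * w k" for k i
  have W: "W = 2 - 2 * v 0"
  proof -
    have "W = (\<Sum>i<n. v i * v i - 2 * (v i * ev0 0 i) + ev0 0 i * ev0 0 i)"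
      unfolding W_def dotn_def w_def by (intro sum.cong) (auto simp: algebra_simps power2_eq_square)
    also have "\<dots> = dotn n v v - 2 * (\<Sum>i<n. v i * ev0 0 i) + (\<Sum>i<n. ev0 0 i * ev0 0 i)"
      by (simp add: sum.distrib sum_subtractf dotn_def sum_distrib_left)
    also have "\<dots> = dotn n v v - 2 * v 0 + 1" using n sum_ev0[of 0 n v] sum_ev0[of 0 n "ev0 0"]
      by (simp add: ev0_def)
    finally show ?thesis using v by simp
  qed
  have H0: "H 0 i = v i" if i: "i < n" for i
  proof (cases "W = 0")
    case True
    have "\<forall>j\<in>{..<n}. w j * w j = 0"
      using True unfolding W_def dotn_def by (subst sum_nonneg_eq_0_iff[symmetric]) auto
    hence "w i = 0" using i by auto
    thus ?thesis using True unfolding H_def c_def w_def by simp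
  next
    case False
    have "c * w 0 = -1" using False W unfolding c_def w_def ev0_def by (simp add: field_simps)
    hence "c * w i * w 0 = - w i" by (metis mult.commute mult_minus1_right mult.assoc)
    thus ?thesis unfolding H_def w_def by simp
  qed
  have Hsym: "H k i = H i k" for k i unfolding H_def ev0_def by auto
  have cW: "c * c * W = 2 * c" unfolding c_def by (cases "W = 0") (auto simp: field_simps)
  have orth: "dotn n (H k) (H l) = (if k = l then 1 else 0)" if k: "k < n" and l: "l < n" for k l
  proof -
    have e1: "dotn n (ev0 k) (ev0 l) = (if k = l then 1 else 0)"
      unfolding dotn_def using sum_ev0[OF l, of "ev0 k"] by (simp add: ev0_def)
    have e2: "dotn n (ev0 k) w = w k" if "k < n" for k
      unfolding dotn_def using sum_ev0[OF that, of w] by (simp add: mult.commute)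
    have "dotn n (H k) (H l) = dotn n (ev0 k) (ev0 l) - c * w k * dotn n (ev0 l) w
       - c * w l * dotn n (ev0 k) w + c * c * w k * w l * W"
      unfolding H_def dotn_def W_def
      by (simp add: algebra_simps sum.distrib sum_subtractf sum_distrib_left)
    also have "\<dots> = (if k = l then 1 else 0) + w k * w l * (c * c * W - 2 * c)"
      unfolding e1 e2[OF k] e2[OF l] by (simp add: algebra_simps)
    also have "\<dots> = (if k = l then 1 else 0)" using cW by simp
    finally show ?thesis .
  qed
  show ?thesis using H0 orth Hsym by blast
qed




definition symn :: "nat \<Rightarrow> (nat \<Rightarrow> nat \<Rightarrow> real) \<Rightarrow> bool" where
  "symn n C \<longleftrightarrow> (\<forall>i<n. \<forall>j<n. C i j = C j i)"

definition orthon :: "nat \<Rightarrow> (nat \<Rightarrow> nat \<Rightarrow> real) \<Rightarrow> bool" where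
  "orthon n V \<longleftrightarrow> (\<forall>k<n. \<forall>l<n. dotn n (V k) (V l) = (if k = l then 1 else 0))"

lemma sum_lessThan_Suc_split: "(\<Sum>k<Suc m. f k) = f 0 + (\<Sum>b<m. f (Suc b))"
  by (rule sum.lessThan_Suc_shift)

lemma expand_sym_basis:
  assumes orth: "orthon n H" and Hsym: "\<forall>k<n. \<forall>i<n. H k i = H i k" and i: "i < n"
  shows "z i = (\<Sum>k<n. dotn n (H k) z * H k i)"
proof -
  have "(\<Sum>k<n. dotn n (H k) z * H k i) = (\<Sum>k<n. \<Sum>j<n. H k j * z j * H k i)"
    unfolding dotn_def by (simp add: sum_distrib_right)
  also have "\<dots> = (\<Sum>j<n. z j * (\<Sum>k<n. H j k * H i k))"
    by (subst sum.swap) (auto simp: sum_distrib_left algebra_simps Hsym i intro!: sum.cong)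
  also have "\<dots> = (\<Sum>j<n. z j * (if j = i then 1 else 0))"
    using orth i unfolding orthon_def dotn_def by (intro sum.cong) auto
  also have "\<dots> = (\<Sum>j<n. if j = i then z j else 0)" by (intro sum.cong) auto
  also have "\<dots> = z i" using i by (simp add: sum.delta)
  finally show ?thesis by simp
qed

lemma spectral_fun:
  "symn n C \<Longrightarrow> \<exists>V \<mu>. (\<forall>k<n. \<forall>i<n. mvn n C (V k) i = \<mu> k * V k i) \<and> orthon n V"
proof (induction n arbitrary: C)
  case 0
  show ?case unfolding orthon_def by auto
next
  case (Suc m)
  let ?n = "Suc m"
  have sym: "\<forall>i<?n. \<forall>j<?n. C i j = C j i" using Suc.prems unfolding symn_def .
  obtain lam x where ev: "\<forall>i<?n. (\<Sum>j<?n. C i j * x j) = lam * x i" and nz: "\<exists>i<?n. x i \<noteq> 0"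
    using real_eigen_exists[of ?n C] sym by auto
  define N where "N = sqrt (dotn ?n x x)"
  have Npos: "dotn ?n x x > 0"
  proof -
    obtain i where i: "i < ?n" "x i \<noteq> 0" using nz by blast
    have "x i * x i \<le> dotn ?n x x" unfolding dotn_def
      by (rule member_le_sum[of i "{..<?n}" "\<lambda>i. x i * x i"]) (use i in auto)
    moreover have "x i * x i > 0" using i by (simp add: zero_less_mult_iff linorder_neq_iff) blast
    ultimately show ?thesis by linarith
  qed
  define v where "v i = x i / N" for i
  have vv: "dotn ?n v v = 1"
  proof -
    have "dotn ?n v v = (\<Sum>i<?n. x i * x i / (N * N))" unfolding v_def dotn_def
      by (intro sum.cong) auto
    also have "\<dots> = dotn ?n x x / (N * N)" unfolding dotn_def
      by (rule sum_divide_distrib[symmetric])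
    also have "N * N = dotn ?n x x" unfolding N_def using Npos by simp
    finally show ?thesis using Npos by simp
  qed
  have evv: "mvn ?n C v i = lam * v i" if "i < ?n" for i
    using ev that unfolding mvn_def v_def by (simp add: sum_divide_distrib[symmetric])
  obtain H where H0: "\<forall>i<?n. H 0 i = v i" and Horth: "orthon ?n H"
    and Hsym: "\<forall>k<?n. \<forall>i<?n. H k i = H i k"
    using householder[OF vv] unfolding orthon_def by auto
  define C' where "C' a b = dotn ?n (H (Suc a)) (mvn ?n C (H (Suc b)))" for a b
  have symC': "symn m C'" unfolding symn_def C'_def
    using dotn_mvn_sym[OF sym] by auto
  obtain V' \<mu>' where evV': "\<forall>k<m. \<forall>i<m. mvn m C' (V' k) i = \<mu>' k * V' k i" and oV': "orthon m V'"
    using Suc.IH[OF symC'] by auto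
  define V where "V k = (if k = 0 then v else (\<lambda>i. \<Sum>b<m. V' (k - 1) b * H (Suc b) i))" for k
  define \<mu> where "\<mu> k = (if k = 0 then lam else \<mu>' (k - 1))" for k
  have dH0: "dotn ?n (H 0) y = dotn ?n v y" for y using H0 by (intro dotn_cong) auto
  have HH: "dotn ?n (H k) (H l) = (if k = l then 1 else 0)" if "k < ?n" "l < ?n" for k l
    using Horth that unfolding orthon_def by auto
  have dVH0: "dotn ?n (V (Suc a)) v = 0" for a
  proof -
    have "dotn ?n (V (Suc a)) v = dotn ?n (V (Suc a)) (H 0)" using dH0[of "V (Suc a)"] by (simp add: dotn_comm)
    also have "\<dots> = (\<Sum>b<m. V' a b * dotn ?n (H (Suc b)) (H 0))"
      unfolding V_def by (simp add: dotn_lin1)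
    also have "\<dots> = 0" using HH by simp
    finally show ?thesis .
  qed
  have dVHS: "dotn ?n (H (Suc b)) (V (Suc a)) = V' a b" if b: "b < m" for a b
  proof -
    have "dotn ?n (H (Suc b)) (V (Suc a)) = (\<Sum>b'<m. V' a b' * dotn ?n (H (Suc b)) (H (Suc b')))"
      unfolding V_def by (simp add: dotn_lin2)
    also have "\<dots> = (\<Sum>b'<m. if b' = b then V' a b' else 0)"
      using HH b by (intro sum.cong) auto
    also have "\<dots> = V' a b" using b by (simp add: sum.delta)
    finally show ?thesis .
  qed
  have orthV: "orthon ?n V"
    unfolding orthon_def
  proof (intro allI impI)
    fix k l assume k: "k < ?n" and l: "l < ?n"
    show "dotn ?n (V k) (V l) = (if k = l then 1 else 0)"
    proof (cases k)
      case 0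
      show ?thesis
      proof (cases l)
        case 0 thus ?thesis using \<open>k = 0\<close> vv V_def by simp
      next
        case (Suc b) thus ?thesis using \<open>k = 0\<close> dVH0[of b] by (simp add: V_def dotn_comm)
      qed
    next
      case (Suc a)
      show ?thesis
      proof (cases l)
        case 0 thus ?thesis using \<open>k = Suc a\<close> dVH0[of a] by (simp add: V_def)
      next
        case (Suc b)
        have a: "a < m" and b: "b < m" using k l \<open>k = Suc a\<close> \<open>l = Suc b\<close> by auto
        have "dotn ?n (V k) (V l) = (\<Sum>b'<m. V' a b' * dotn ?n (H (Suc b')) (V (Suc b)))"
          unfolding \<open>k = Suc a\<close> \<open>l = Suc b\<close> by (subst (1) V_def) (simp add: dotn_lin1)
        also have "\<dots> = (\<Sum>b'<m. V' a b' * V' b b')" using dVHS by simp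
        also have "\<dots> = dotn m (V' a) (V' b)" unfolding dotn_def ..
        also have "\<dots> = (if a = b then 1 else 0)" using oV' a b unfolding orthon_def by auto
        finally show ?thesis using \<open>k = Suc a\<close> \<open>l = Suc b\<close> by simp
      qed
    qed
  qed
  have evV: "mvn ?n C (V k) i = \<mu> k * V k i" if k: "k < ?n" and i: "i < ?n" for k i
  proof (cases k)
    case 0 thus ?thesis using evv[OF i] by (simp add: V_def \<mu>_def)
  next
    case (Suc a)
    have a: "a < m" using k Suc by simp
    define Y where "Y = V (Suc a)"
    define z where "z = mvn ?n C Y"
    have z0: "dotn ?n (H 0) z = 0"
    proof -
      have "dotn ?n (H 0) z = dotn ?n v (mvn ?n C Y)" unfolding z_def by (rule dH0)
      also have "\<dots> = dotn ?n Y (mvn ?n C v)" by (rule dotn_mvn_sym[OF sym])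
      also have "\<dots> = dotn ?n Y (\<lambda>i. lam * v i)" using evv by (intro dotn_cong) auto
      also have "\<dots> = 0" using dVH0[of a] unfolding Y_def by (simp add: dotn_scale2)
      finally show ?thesis .
    qed
    have zS: "dotn ?n (H (Suc b)) z = \<mu>' a * V' a b" if b: "b < m" for b
    proof -
      have "dotn ?n (H (Suc b)) z = (\<Sum>b'<m. V' a b' * C' b b')"
        unfolding z_def Y_def V_def C'_def by (simp add: mvn_lin dotn_lin2)
      also have "\<dots> = mvn m C' (V' a) b" unfolding mvn_def by (simp add: mult.commute)
      also have "\<dots> = \<mu>' a * V' a b" using evV' a b by simp
      finally show ?thesis .
    qed
    have "z i = (\<Sum>k<?n. dotn ?n (H k) z * H k i)"
      by (rule expand_sym_basis[OF Horth Hsym i])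
    also have "\<dots> = (\<Sum>b<m. \<mu>' a * V' a b * H (Suc b) i)"
      unfolding sum_lessThan_Suc_split using z0 zS by simp
    also have "\<dots> = \<mu>' a * Y i" unfolding Y_def V_def by (simp add: sum_distrib_left mult.assoc)
    finally show ?thesis unfolding z_def Y_def using Suc by (simp add: \<mu>_def)
  qed
  show ?case using evV orthV by blast
qed




definition completen :: "nat \<Rightarrow> (nat \<Rightarrow> nat \<Rightarrow> real) \<Rightarrow> bool" where
  "completen n V \<longleftrightarrow> (\<forall>i<n. \<forall>j<n. (\<Sum>k<n. V k i * V k j) = (if i = j then 1 else 0))"

lemma mat_entry_sum: "i < n \<Longrightarrow> j < n \<Longrightarrow>
  (mat n n f * mat n n g) $$ (i, j) = (\<Sum>k<n. f (i, k) * g (k, j))"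
  by (simp add: scalar_prod_def atLeast0LessThan)

lemma orthon_complete:
  assumes "orthon n V" shows "completen n V"
proof -
  define U where "U = mat n n (\<lambda>(i,k). V k i)"
  define UT where "UT = mat n n (\<lambda>(k,i). V k i)"
  have U: "U \<in> carrier_mat n n" "UT \<in> carrier_mat n n" unfolding U_def UT_def by auto
  have "UT * U = 1\<^sub>m n"
  proof (rule eq_matI)
    fix k l assume k: "k < dim_row (1\<^sub>m n :: real mat)" and l: "l < dim_col (1\<^sub>m n :: real mat)"
    have "(UT * U) $$ (k, l) = dotn n (V k) (V l)" using k l unfolding UT_def U_def dotn_def
      by (simp add: scalar_prod_def atLeast0LessThan)
    thus "(UT * U) $$ (k, l) = 1\<^sub>m n $$ (k, l)" using assms k l unfolding orthon_def by auto
  qed (auto simp: U_def UT_def)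
  hence UU: "U * UT = 1\<^sub>m n" using mat_mult_left_right_inverse[OF U(2) U(1)] by simp
  show ?thesis unfolding completen_def
  proof (intro allI impI)
    fix i j assume i: "i < n" and j: "j < n"
    have "(U * UT) $$ (i, j) = (\<Sum>k<n. V k i * V k j)" using i j unfolding U_def UT_def
      by (simp add: scalar_prod_def atLeast0LessThan)
    thus "(\<Sum>k<n. V k i * V k j) = (if i = j then 1 else 0)" using UU i j by simp
  qed
qed

lemma complete_expand:
  assumes "completen n V" and i: "i < n"
  shows "z i = (\<Sum>k<n. dotn n (V k) z * V k i)"
proof -
  have "(\<Sum>k<n. dotn n (V k) z * V k i) = (\<Sum>k<n. \<Sum>j<n. V k j * z j * V k i)"
    unfolding dotn_def by (simp add: sum_distrib_right)
  also have "\<dots> = (\<Sum>j<n. z j * (\<Sum>k<n. V k j * V k i))"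
    by (subst sum.swap) (auto simp: sum_distrib_left algebra_simps intro!: sum.cong)
  also have "\<dots> = (\<Sum>j<n. if j = i then z j else 0)"
    using assms i unfolding completen_def by (intro sum.cong) auto
  also have "\<dots> = z i" using i by (simp add: sum.delta)
  finally show ?thesis by simp
qed

lemma charpoly_roots:
  assumes sym: "symn n C" and ev: "\<forall>k<n. \<forall>i<n. mvn n C (V k) i = \<mu> k * V k i"
    and orth: "orthon n V"
  shows "proots (char_poly (mat n n (\<lambda>(i,j). C i j))) = mset (map \<mu> [0..<n])"
proof -
  have comp: "completen n V" by (rule orthon_complete[OF orth])
  define U where "U = mat n n (\<lambda>(i,k). V k i)"
  define UT where "UT = mat n n (\<lambda>(k,i). V k i)"
  define D where "D = mat n n (\<lambda>(i,j). if i = j then \<mu> i else 0)"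
  define CJ where "CJ = mat n n (\<lambda>(i,j). C i j)"
  have U: "U \<in> carrier_mat n n" "UT \<in> carrier_mat n n" "D \<in> carrier_mat n n" "CJ \<in> carrier_mat n n"
    unfolding U_def UT_def D_def CJ_def by auto
  have UU: "U * UT = 1\<^sub>m n"
  proof (rule eq_matI)
    fix i j assume i: "i < dim_row (1\<^sub>m n :: real mat)" and j: "j < dim_col (1\<^sub>m n :: real mat)"
    have "(U * UT) $$ (i, j) = (\<Sum>k<n. V k i * V k j)" using i j unfolding U_def UT_def
      by (simp add: scalar_prod_def atLeast0LessThan)
    thus "(U * UT) $$ (i, j) = 1\<^sub>m n $$ (i, j)" using comp i j unfolding completen_def by auto
  qed (auto simp: U_def UT_def)
  have UU2: "UT * U = 1\<^sub>m n" using mat_mult_left_right_inverse[OF U(1) U(2) UU] .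
  have CJeq: "CJ = U * D * UT"
  proof (rule eq_matI)
    fix i j assume i: "i < dim_row (U * D * UT)" and j: "j < dim_col (U * D * UT)"
    hence i: "i < n" and j: "j < n" using U by auto
    have "(U * D * UT) $$ (i, j) = (\<Sum>k<n. (U * D) $$ (i, k) * V k j)"
      using i j U unfolding UT_def by (simp add: scalar_prod_def atLeast0LessThan)
    also have "\<dots> = (\<Sum>k<n. V k i * \<mu> k * V k j)"
    proof (intro sum.cong refl)
      fix k assume k: "k \<in> {..<n}"
      have "(U * D) $$ (i, k) = (\<Sum>l<n. V l i * (if l = k then \<mu> l else 0))"
        using i k unfolding U_def D_def by (simp add: scalar_prod_def atLeast0LessThan)
      also have "\<dots> = (\<Sum>l<n. if l = k then V l i * \<mu> l else 0)" by (intro sum.cong) auto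
      also have "\<dots> = V k i * \<mu> k" using k by (simp add: sum.delta)
      finally show "(U * D) $$ (i, k) * V k j = V k i * \<mu> k * V k j" by simp
    qed
    also have "\<dots> = (\<Sum>k<n. dotn n (V k) (\<lambda>l. C l i) * V k j)"
    proof (intro sum.cong refl)
      fix k assume k: "k \<in> {..<n}"
      have "dotn n (V k) (\<lambda>l. C l i) = mvn n C (V k) i" unfolding dotn_def mvn_def
        using sym i unfolding symn_def by (intro sum.cong) (auto simp: mult.commute)
      thus "V k i * \<mu> k * V k j = dotn n (V k) (\<lambda>l. C l i) * V k j" using ev k i by simp
    qed
    also have "\<dots> = C j i" using complete_expand[OF comp j, of "\<lambda>l. C l i"] by simp
    also have "\<dots> = CJ $$ (i, j)" unfolding CJ_def using i j sym unfolding symn_def by simp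
    finally show "CJ $$ (i, j) = (U * D * UT) $$ (i, j)" by simp
  qed (use U in auto)
  have "similar_mat CJ D" unfolding similar_mat_def similar_mat_wit_def
    using U UU UU2 CJeq by (intro exI[of _ U] exI[of _ UT]) (auto simp: Let_def)
  hence "char_poly CJ = char_poly D" by (rule char_poly_similar)
  also have "char_poly D = (\<Prod>a\<leftarrow>diag_mat D. [:- a, 1:])"
    by (rule char_poly_upper_triangular[OF U(3)]) (auto simp: upper_triangular_def D_def)
  also have "diag_mat D = map \<mu> [0..<n]" unfolding diag_mat_def D_def by auto
  finally have cp: "char_poly CJ = (\<Prod>a\<leftarrow>map \<mu> [0..<n]. [:- a, 1:])" .
  have "proots (\<Prod>a\<leftarrow>xs. [:- a, 1:]) = mset xs" for xs :: "real list"
  proof (induction xs)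
    case Nil thus ?case by simp
  next
    case (Cons a xs)
    have "(\<Prod>a\<leftarrow>xs. [:- a, 1:]) \<noteq> 0" by (auto simp: prod_list_zero_iff)
    have "proots ([:- a, 1:] * (\<Prod>a\<leftarrow>xs. [:- a, 1:])) = proots [:- a, 1:] + proots (\<Prod>a\<leftarrow>xs. [:- a, 1:])"
      by (rule proots_mult) (use \<open>(\<Prod>a\<leftarrow>xs. [:- a, 1:]) \<noteq> 0\<close> in auto)
    thus ?case using Cons.IH by (simp del: mult_pCons_left)
  qed
  from this[of "map \<mu> [0..<n]"] show ?thesis using cp unfolding CJ_def by (simp only:)
qed




lemma parseval:
  assumes "completen n V"
  shows "dotn n y z = (\<Sum>k<n. dotn n (V k) y * dotn n (V k) z)"
proof -
  have "dotn n y z = dotn n y (\<lambda>i. \<Sum>k<n. dotn n (V k) z * V k i)"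
    using complete_expand[OF assms] by (intro dotn_cong) auto
  also have "\<dots> = (\<Sum>k<n. dotn n (V k) z * dotn n y (V k))" by (simp add: dotn_lin2)
  finally show ?thesis by (simp add: dotn_comm mult.commute)
qed

lemma dotn_eigen:
  assumes sym: "symn n C" and ev: "\<forall>k<n. \<forall>i<n. mvn n C (V k) i = \<mu> k * V k i" and k: "k < n"
  shows "dotn n (V k) (mvn n C x) = \<mu> k * dotn n (V k) x"
proof -
  have "dotn n (V k) (mvn n C x) = dotn n x (mvn n C (V k))"
    using dotn_mvn_sym sym unfolding symn_def by blast
  also have "\<dots> = dotn n x (\<lambda>i. \<mu> k * V k i)" using ev k by (intro dotn_cong) auto
  finally show ?thesis by (simp add: dotn_scale2 dotn_comm)
qed

lemma quad_expand:
  assumes sym: "symn n C" and ev: "\<forall>k<n. \<forall>i<n. mvn n C (V k) i = \<mu> k * V k i"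
    and comp: "completen n V"
  shows "dotn n x (mvn n C x) = (\<Sum>k<n. \<mu> k * (dotn n (V k) x)^2)"
  unfolding parseval[OF comp, of x] using dotn_eigen[OF sym ev]
  by (intro sum.cong) (auto simp: power2_eq_square)

lemma norm_expand:
  assumes comp: "completen n V"
  shows "dotn n x x = (\<Sum>k<n. (dotn n (V k) x)^2)"
  unfolding parseval[OF comp, of x] by (simp add: power2_eq_square)

lemma card_gt1_obtain:
  assumes "finite K" "\<not> card K \<le> 1"
  obtains a b where "a \<in> K" "b \<in> K" "a \<noteq> b"
  using assms card_le_Suc0_iff_eq[of K] by auto

lemma UPn:
  assumes sym: "symn n C" and ev: "\<forall>k<n. \<forall>i<n. mvn n C (V k) i = \<mu> k * V k i"
    and orth: "orthon n V" and c: "c \<ge> 0"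
    and hyp: "\<forall>x. dotn n x u = 0 \<longrightarrow> dotn n x (mvn n C x) \<le> c * dotn n x x"
  shows "card {k. k < n \<and> \<mu> k > c} \<le> 1"
proof (rule ccontr)
  assume nc: "\<not> ?thesis"
  have fin: "finite {k. k < n \<and> \<mu> k > c}" by auto
  obtain k1 k2 where "k1 \<in> {k. k < n \<and> \<mu> k > c}" "k2 \<in> {k. k < n \<and> \<mu> k > c}" "k1 \<noteq> k2"
    using card_gt1_obtain[OF fin nc] by blast
  hence k: "k1 < n" "k2 < n" "k1 \<noteq> k2" "\<mu> k1 > c" "\<mu> k2 > c" by auto
  have VV: "dotn n (V k) (V l) = (if k = l then 1 else 0)" if "k < n" "l < n" for k l
    using orth that unfolding orthon_def by auto
  define a1 where "a1 = dotn n (V k1) u"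
  define a2 where "a2 = dotn n (V k2) u"
  show False
  proof (cases "a1 = 0")
    case True
    have "dotn n (V k1) (mvn n C (V k1)) = \<mu> k1"
      using dotn_eigen[OF sym ev k(1), of "V k1"] VV k by simp
    moreover have "dotn n (V k1) (mvn n C (V k1)) \<le> c" using hyp[rule_format, of "V k1"] True VV k
      unfolding a1_def by simp
    ultimately show False using k by simp
  next
    case False
    define cf where "cf k = (if k = k1 then a2 else - a1)" for k
    define K where "K = {k1, k2}"
    have fK: "finite K" "K \<subseteq> {..<n}" unfolding K_def using k by auto
    define x where "x i = (\<Sum>k\<in>K. cf k * V k i)" for i
    have xV: "dotn n (V l) x = cf l" if "l \<in> K" for l
    proof -
      have "dotn n (V l) x = (\<Sum>k\<in>K. cf k * dotn n (V l) (V k))"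
        unfolding x_def by (simp add: dotn_lin2 fK)
      also have "\<dots> = (\<Sum>k\<in>K. if k = l then cf k else 0)"
      proof (intro sum.cong refl)
        fix k assume "k \<in> K"
        hence "k < n" "l < n" using fK that by auto
        thus "cf k * dotn n (V l) (V k) = (if k = l then cf k else 0)" using VV by auto
      qed
      also have "\<dots> = cf l" using that fK by (simp add: sum.delta)
      finally show ?thesis .
    qed
    have xu: "dotn n x u = 0"
    proof -
      have "dotn n x u = (\<Sum>k\<in>K. cf k * dotn n (V k) u)" unfolding x_def by (rule dotn_lin1[OF fK(1)])
      also have "\<dots> = 0" using k unfolding K_def cf_def a1_def a2_def by simp
      finally show ?thesis .
    qed
    have quad: "dotn n x (mvn n C x) = (\<Sum>k\<in>K. \<mu> k * (cf k)^2)"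
    proof -
      have "dotn n x (mvn n C x) = dotn n x (\<lambda>i. \<Sum>k\<in>K. cf k * (\<mu> k * V k i))"
        unfolding x_def mvn_lin[OF fK(1)] using ev fK by (intro dotn_cong refl sum.cong) auto
      also have "\<dots> = (\<Sum>k\<in>K. cf k * (\<mu> k * dotn n x (V k)))"
        by (simp add: dotn_lin2 fK dotn_scale2)
      also have "\<dots> = (\<Sum>k\<in>K. \<mu> k * (cf k)^2)"
        using xV by (intro sum.cong) (auto simp: dotn_comm power2_eq_square)
      finally show ?thesis .
    qed
    have nrm: "dotn n x x = (\<Sum>k\<in>K. (cf k)^2)"
    proof -
      have "dotn n x x = (\<Sum>k\<in>K. cf k * dotn n (V k) x)"
        unfolding x_def by (simp add: dotn_lin1 fK)
      also have "\<dots> = (\<Sum>k\<in>K. (cf k)^2)"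
        using xV by (intro sum.cong) (auto simp: power2_eq_square)
      finally show ?thesis .
    qed
    have "dotn n x (mvn n C x) \<le> c * dotn n x x" using hyp xu by blast
    hence "\<mu> k1 * a2^2 + \<mu> k2 * a1^2 \<le> c * (a2^2 + a1^2)"
      unfolding quad nrm K_def using k by (simp add: cf_def)
    moreover have "\<mu> k1 * a2^2 \<ge> c * a2^2" using k by (intro mult_right_mono) auto
    moreover have "\<mu> k2 * a1^2 > c * a1^2" using k False by (intro mult_strict_right_mono) auto
    ultimately show False by (simp add: algebra_simps)
  qed
qed

lemma LOWn:
  assumes sym: "symn n C" and ev: "\<forall>k<n. \<forall>i<n. mvn n C (V k) i = \<mu> k * V k i"
    and orth: "orthon n V" and le1: "\<forall>k<n. \<mu> k \<le> 1"
    and unz: "\<exists>i<n. u i \<noteq> 0" and uq: "dotn n u (mvn n C u) = dotn n u u"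
    and T: "T \<ge> 0" and card: "card {k. k < n \<and> \<mu> k > T} \<le> 1"
    and xu: "dotn n x u = 0"
  shows "dotn n x (mvn n C x) \<le> T * dotn n x x"
proof -
  have comp: "completen n V" by (rule orthon_complete[OF orth])
  define a where "a k = dotn n (V k) u" for k
  define cc where "cc k = dotn n (V k) x" for k
  have "(\<Sum>k<n. \<mu> k * (a k)^2) = (\<Sum>k<n. (a k)^2)"
    using uq unfolding quad_expand[OF sym ev comp] norm_expand[OF comp] a_def .
  moreover have "(\<Sum>k<n. (1 - \<mu> k) * (a k)^2) = (\<Sum>k<n. (a k)^2) - (\<Sum>k<n. \<mu> k * (a k)^2)"
    by (simp add: sum_subtractf left_diff_distrib)
  ultimately have "(\<Sum>k<n. (1 - \<mu> k) * (a k)^2) = 0" by simp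
  moreover have "\<forall>k\<in>{..<n}. (1 - \<mu> k) * (a k)^2 \<ge> 0"
  proof
    fix k assume "k \<in> {..<n}"
    hence "1 - \<mu> k \<ge> 0" using le1 by simp
    thus "(1 - \<mu> k) * (a k)^2 \<ge> 0" by (intro mult_nonneg_nonneg) auto
  qed
  ultimately have z: "\<forall>k\<in>{..<n}. (1 - \<mu> k) * (a k)^2 = 0"
    using sum_nonneg_eq_0_iff[of "{..<n}" "\<lambda>k. (1 - \<mu> k) * (a k)^2"] by simp
  have xu': "(\<Sum>k<n. cc k * a k) = 0" using xu unfolding parseval[OF comp, of x u] cc_def a_def .
  have trm: "\<mu> k * (cc k)^2 \<le> T * (cc k)^2" if k: "k < n" for k
  proof (cases "\<mu> k \<le> T")
    case True thus ?thesis by (intro mult_right_mono) auto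
  next
    case False
    have others: "a l = 0" if l: "l < n" "l \<noteq> k" for l
    proof -
      have "\<not> \<mu> l > T"
      proof
        assume "\<mu> l > T"
        hence "k \<in> {k. k < n \<and> \<mu> k > T}" "l \<in> {k. k < n \<and> \<mu> k > T}" using False k l by auto
        moreover have "finite {k. k < n \<and> \<mu> k > T}" by simp
        ultimately show False using card card_le_Suc0_iff_eq[of "{k. k < n \<and> \<mu> k > T}"] l(2)
          by (metis One_nat_def)
      qed
      hence "\<mu> l < 1" using False le1 k by auto
      moreover have "(1 - \<mu> l) * (a l)^2 = 0" using z l by simp
      ultimately show ?thesis by simp
    qed
    have ak: "a k \<noteq> 0"
    proof
      assume ak0: "a k = 0"
      obtain i where i: "i < n" "u i \<noteq> 0" using unz by blast
      have "u i = (\<Sum>l<n. a l * V l i)" using complete_expand[OF comp i(1)] unfolding a_def .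
      also have "\<dots> = 0" using others ak0 by (intro sum.neutral) auto
      finally show False using i by simp
    qed
    have "(\<Sum>l<n. cc l * a l) = (\<Sum>l<n. if l = k then cc l * a l else 0)"
      using others by (intro sum.cong) auto
    also have "\<dots> = cc k * a k" using k by (simp add: sum.delta)
    finally have "cc k = 0" using xu' ak by simp
    thus ?thesis by simp
  qed
  have "dotn n x (mvn n C x) = (\<Sum>k<n. \<mu> k * (cc k)^2)"
    unfolding quad_expand[OF sym ev comp] cc_def ..
  also have "\<dots> \<le> (\<Sum>k<n. T * (cc k)^2)" by (rule sum_mono) (use trm in auto)
  also have "\<dots> = T * dotn n x x" unfolding norm_expand[OF comp] cc_def by (simp add: sum_distrib_left)
  finally show ?thesis .
qed

lemma sorted_second:
  fixes xs :: "real list"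
  assumes len: "length xs \<ge> 2"
  shows "card {k. k < length xs \<and> xs ! k > rev (sort xs) ! 1} \<le> 1"
    and "card {k. k < length xs \<and> xs ! k > c} \<le> 1 \<Longrightarrow> rev (sort xs) ! 1 \<le> c"
proof -
  define L where "L = sort xs"
  define m where "m = length xs"
  have lenL: "length L = m" unfolding L_def m_def by simp
  have sL: "sorted L" unfolding L_def by simp
  have t: "rev L ! 1 = L ! (m - 2)" using len lenL unfolding m_def by (simp add: rev_nth numeral_2_eq_2)
  have cnt: "card {k. k < m \<and> xs ! k > d} = card {k. k < m \<and> L ! k > d}" for d
  proof -
    have "card {k. k < m \<and> xs ! k > d} = length (filter (\<lambda>y. y > d) xs)"
      unfolding m_def by (simp add: length_filter_conv_card)
    also have "\<dots> = length (filter (\<lambda>y. y > d) L)"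
      unfolding L_def by (simp add: filter_sort)
    also have "\<dots> = card {k. k < m \<and> L ! k > d}" using lenL by (simp add: length_filter_conv_card)
    finally show ?thesis .
  qed
  have mono: "L ! i \<le> L ! j" if "i \<le> j" "j < m" for i j
    using sorted_nth_mono[OF sL that(1)] that lenL by simp
  have sub: "{k. k < m \<and> L ! k > L ! (m - 2)} \<subseteq> {m - 1}"
  proof
    fix k assume "k \<in> {k. k < m \<and> L ! k > L ! (m - 2)}"
    hence k: "k < m" "L ! k > L ! (m - 2)" by auto
    have "\<not> k \<le> m - 2"
    proof
      assume "k \<le> m - 2"
      hence "L ! k \<le> L ! (m - 2)" by (rule mono) (use len m_def in auto)
      thus False using k by simp
    qed
    thus "k \<in> {m - 1}" using k by auto
  qed
  hence "card {k. k < m \<and> L ! k > L ! (m - 2)} \<le> 1"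
    using card_mono[OF _ sub] by simp
  thus "card {k. k < length xs \<and> xs ! k > rev (sort xs) ! 1} \<le> 1"
    using cnt t unfolding L_def m_def by simp
  assume h: "card {k. k < length xs \<and> xs ! k > c} \<le> 1"
  show "rev (sort xs) ! 1 \<le> c"
  proof (rule ccontr)
    assume "\<not> ?thesis"
    hence gt: "L ! (m - 2) > c" using t unfolding L_def by simp
    have "L ! (m - 2) \<le> L ! (m - 1)" by (rule mono) (use len m_def in auto)
    hence "L ! (m - 1) > c" using gt by simp
    hence "{m - 2, m - 1} \<subseteq> {k. k < m \<and> L ! k > c}" using gt len m_def by auto
    hence "card {m - 2, m - 1} \<le> card {k. k < m \<and> L ! k > c}" by (intro card_mono) auto
    moreover have "card {m - 2, m - 1} = 2" using len m_def by auto
    ultimately show False using h cnt unfolding m_def by simp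
  qed
qed




definition sdot :: "'a set \<Rightarrow> ('a \<Rightarrow> real) \<Rightarrow> ('a \<Rightarrow> real) \<Rightarrow> real" where
  "sdot S x y = (\<Sum>a\<in>S. x a * y a)"
definition smv :: "'a set \<Rightarrow> ('a \<Rightarrow> 'a \<Rightarrow> real) \<Rightarrow> ('a \<Rightarrow> real) \<Rightarrow> 'a \<Rightarrow> real" where
  "smv S M x = (\<lambda>a. \<Sum>b\<in>S. M a b * x b)"

lemma enum_bij: "finite S \<Longrightarrow> bij_betw (enum_on S) {..<card S} S"
proof -
  assume "finite S"
  from ex_bij_betw_nat_finite[OF this] obtain h where "bij_betw h {..<card S} S"
    by (auto simp: atLeast0LessThan)
  thus ?thesis unfolding enum_on_def using someI[of "\<lambda>f. bij_betw f {..<card S} S" h] by simp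
qed

lemma mvn_cong: "(\<And>j. j < n \<Longrightarrow> z j = z' j) \<Longrightarrow> mvn n C z = mvn n C z'"
  unfolding mvn_def by (intro ext sum.cong) auto

lemma dotn_nonneg: "dotn n z z \<ge> 0"
  unfolding dotn_def by (intro sum_nonneg) auto

context
  fixes S :: "'a set" and M :: "'a \<Rightarrow> 'a \<Rightarrow> real"
  assumes fin: "finite S"
begin

abbreviation "nn \<equiv> card S"
abbreviation "ee \<equiv> enum_on S"
definition "Mn i j = M (ee i) (ee j)"
definition "Cn i j = (\<Sum>k<nn. Mn k i * Mn k j)"

lemma bij: "bij_betw ee {..<nn} S" by (rule enum_bij[OF fin])

lemma tm: "transpose_mat (to_mat S M) * to_mat S M = mat nn nn (\<lambda>(i,j). Cn i j)"
  by (rule eq_matI) (auto simp: to_mat_def Cn_def Mn_def scalar_prod_def atLeast0LessThan)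

lemma symCn: "symn nn Cn" unfolding symn_def Cn_def by (auto simp: mult.commute)

lemma quadCn: "dotn nn y (mvn nn Cn y) = dotn nn (mvn nn Mn y) (mvn nn Mn y)"
proof -
  have "dotn nn y (mvn nn Cn y) = (\<Sum>i<nn. \<Sum>j<nn. \<Sum>k<nn. y i * Mn k i * (Mn k j * y j))"
    by (simp add: dotn_def mvn_def Cn_def sum_distrib_left sum_distrib_right mult_ac)
  also have "\<dots> = (\<Sum>i<nn. \<Sum>k<nn. \<Sum>j<nn. y i * Mn k i * (Mn k j * y j))"
    by (intro sum.cong refl sum.swap)
  also have "\<dots> = (\<Sum>k<nn. \<Sum>i<nn. \<Sum>j<nn. y i * Mn k i * (Mn k j * y j))"
    by (rule sum.swap)
  also have "\<dots> = dotn nn (mvn nn Mn y) (mvn nn Mn y)"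
    by (simp add: dotn_def mvn_def sum_distrib_left sum_distrib_right mult_ac)
  finally show ?thesis .
qed

lemma sdot_n: "sdot S x y = dotn nn (\<lambda>i. x (ee i)) (\<lambda>i. y (ee i))"
  unfolding sdot_def dotn_def using sum.reindex_bij_betw[OF bij, of "\<lambda>a. x a * y a"] by simp

lemma smv_n: "i < nn \<Longrightarrow> smv S M x (ee i) = mvn nn Mn (\<lambda>i. x (ee i)) i"
  unfolding smv_def mvn_def Mn_def using sum.reindex_bij_betw[OF bij, of "\<lambda>b. M (ee i) b * x b"] by simp

lemma quadS: "sdot S (smv S M x) (smv S M x) = dotn nn (\<lambda>i. x (ee i)) (mvn nn Cn (\<lambda>i. x (ee i)))"
  unfolding sdot_n quadCn using smv_n by (intro dotn_cong) auto

definition "back y = (\<lambda>a. y (inv_into {..<nn} ee a))"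

lemma back_e: "i < nn \<Longrightarrow> back y (ee i) = y i"
  unfolding back_def using bij by (simp add: bij_betw_def inv_into_f_f)

lemma quad_back: "dotn nn (\<lambda>i. back y (ee i)) (mvn nn Cn (\<lambda>i. back y (ee i))) = dotn nn y (mvn nn Cn y)"
proof -
  have "mvn nn Cn (\<lambda>i. back y (ee i)) = mvn nn Cn y" by (rule mvn_cong) (simp add: back_e)
  thus ?thesis by (simp add: back_e cong: dotn_cong)
qed

lemma dot_back: "dotn nn (\<lambda>i. back y (ee i)) z = dotn nn y z"
  by (rule dotn_cong) (auto simp: back_e)

lemma sdot_back1: "sdot S (back y) u = dotn nn y (\<lambda>i. u (ee i))"
  unfolding sdot_n by (rule dotn_cong) (auto simp: back_e)

lemma sdot_back: "sdot S (back y) (back y) = dotn nn y y"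
  unfolding sdot_n by (rule dotn_cong) (auto simp: back_e)

lemma quadS_back: "sdot S (smv S M (back y)) (smv S M (back y)) = dotn nn y (mvn nn Cn y)"
  using quadS quad_back by simp

lemma sv_data:
  "\<exists>V \<mu>. (\<forall>k<nn. \<forall>i<nn. mvn nn Cn (V k) i = \<mu> k * V k i) \<and> orthon nn V \<and>
     singular_values S M = rev (sort (map (\<lambda>k. sqrt (\<mu> k)) [0..<nn]))"
proof -
  obtain V \<mu> where ev: "\<forall>k<nn. \<forall>i<nn. mvn nn Cn (V k) i = \<mu> k * V k i" and o: "orthon nn V"
    using spectral_fun[OF symCn] by blast
  have "proots (char_poly (mat nn nn (\<lambda>(i,j). Cn i j))) = mset (map \<mu> [0..<nn])"
    by (rule charpoly_roots[OF symCn ev o])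
  hence "singular_values S M = rev (sort (map (\<lambda>k. sqrt (\<mu> k)) [0..<nn]))"
    unfolding singular_values_def Let_def tm by (simp flip: mset_map add: o_def)
  thus ?thesis using ev o by blast
qed

lemma mu_bounds:
  assumes ev: "\<forall>k<nn. \<forall>i<nn. mvn nn Cn (V k) i = \<mu> k * V k i" and o: "orthon nn V" and k: "k < nn"
  shows "\<mu> k = dotn nn (V k) (mvn nn Cn (V k))" "\<mu> k \<ge> 0"
proof -
  have "dotn nn (V k) (mvn nn Cn (V k)) = dotn nn (V k) (\<lambda>i. \<mu> k * V k i)"
    using ev k by (intro dotn_cong) auto
  also have "\<dots> = \<mu> k" using o k unfolding orthon_def by (simp add: dotn_scale2)
  finally show "\<mu> k = dotn nn (V k) (mvn nn Cn (V k))" by simp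
  thus "\<mu> k \<ge> 0" using quadCn dotn_nonneg by simp
qed

lemma sigma2_upper:
  assumes c: "c \<ge> 0"
    and hyp: "\<forall>x. sdot S x u = 0 \<longrightarrow> sdot S (smv S M x) (smv S M x) \<le> c * sdot S x x"
  shows "sigma2 S M \<le> sqrt c"
proof -
  obtain V \<mu> where ev: "\<forall>k<nn. \<forall>i<nn. mvn nn Cn (V k) i = \<mu> k * V k i" and o: "orthon nn V"
    and sv: "singular_values S M = rev (sort (map (\<lambda>k. sqrt (\<mu> k)) [0..<nn]))"
    using sv_data by blast
  have hn: "\<forall>y. dotn nn y (\<lambda>i. u (ee i)) = 0 \<longrightarrow> dotn nn y (mvn nn Cn y) \<le> c * dotn nn y y"
  proof (intro allI impI)
    fix y assume y: "dotn nn y (\<lambda>i. u (ee i)) = 0"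
    have "sdot S (back y) u = 0" unfolding sdot_back1 using y .
    hence "sdot S (smv S M (back y)) (smv S M (back y)) \<le> c * sdot S (back y) (back y)" using hyp by blast
    thus "dotn nn y (mvn nn Cn y) \<le> c * dotn nn y y"
      unfolding quadS_back sdot_back .
  qed
  have card: "card {k. k < nn \<and> \<mu> k > c} \<le> 1" by (rule UPn[OF symCn ev o c hn])
  show ?thesis
  proof (cases "nn \<ge> 2")
    case True
    define xs where "xs = map (\<lambda>k. sqrt (\<mu> k)) [0..<nn]"
    have "{k. k < length xs \<and> xs ! k > sqrt c} = {k. k < nn \<and> \<mu> k > c}"
      unfolding xs_def by auto
    hence "rev (sort xs) ! 1 \<le> sqrt c" using sorted_second(2)[of xs "sqrt c"] True card
      unfolding xs_def by simp
    thus ?thesis unfolding sigma2_def sv xs_def using True by simp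
  next
    case False thus ?thesis unfolding sigma2_def sv using c by simp
  qed
qed

lemma sigma2_lower:
  assumes uS: "a \<in> S" "u a \<noteq> 0"
    and hnorm: "\<forall>x. sdot S (smv S M x) (smv S M x) \<le> sdot S x x"
    and hu: "sdot S (smv S M u) (smv S M u) = sdot S u u"
  shows "0 \<le> sigma2 S M \<and> (\<forall>x. sdot S x u = 0 \<longrightarrow>
     sdot S (smv S M x) (smv S M x) \<le> (sigma2 S M)^2 * sdot S x x)"
proof -
  obtain V \<mu> where ev: "\<forall>k<nn. \<forall>i<nn. mvn nn Cn (V k) i = \<mu> k * V k i" and o: "orthon nn V"
    and sv: "singular_values S M = rev (sort (map (\<lambda>k. sqrt (\<mu> k)) [0..<nn]))"
    using sv_data by blast
  have hn: "dotn nn y (mvn nn Cn y) \<le> dotn nn y y" for y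
    using hnorm[rule_format, of "back y"] unfolding quadS_back sdot_back .
  have le1: "\<forall>k<nn. \<mu> k \<le> 1"
  proof (intro allI impI)
    fix k assume k: "k < nn"
    have "\<mu> k = dotn nn (V k) (mvn nn Cn (V k))" by (rule mu_bounds(1)[OF ev o k])
    also have "\<dots> \<le> dotn nn (V k) (V k)" by (rule hn)
    also have "\<dots> = 1" using o k unfolding orthon_def by simp
    finally show "\<mu> k \<le> 1" .
  qed
  define t where "t = sigma2 S M"
  have tc: "t \<ge> 0 \<and> card {k. k < nn \<and> \<mu> k > t^2} \<le> 1"
  proof (cases "nn \<ge> 2")
    case True
    define xs where "xs = map (\<lambda>k. sqrt (\<mu> k)) [0..<nn]"
    have t: "t = rev (sort xs) ! 1" unfolding t_def sigma2_def sv xs_def using True by simp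
    have "t \<in> set (rev (sort xs))" unfolding t using True xs_def by (intro nth_mem) auto
    hence "t \<in> set xs" by simp
    then obtain k where "k < nn" "t = sqrt (\<mu> k)" unfolding xs_def by auto
    hence t0: "t \<ge> 0" using mu_bounds(2)[OF ev o] by simp
    have "{k. k < nn \<and> \<mu> k > t^2} \<subseteq> {k. k < length xs \<and> xs ! k > t}"
    proof
      fix k assume "k \<in> {k. k < nn \<and> \<mu> k > t^2}"
      hence k: "k < nn" "\<mu> k > t^2" by auto
      have "sqrt (\<mu> k) > sqrt (t^2)" using k by (simp only: real_sqrt_less_iff)
      thus "k \<in> {k. k < length xs \<and> xs ! k > t}" using k t0 unfolding xs_def by simp
    qed
    hence "card {k. k < nn \<and> \<mu> k > t^2} \<le> card {k. k < length xs \<and> xs ! k > t}"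
      by (intro card_mono) auto
    also have "\<dots> \<le> 1" unfolding t using sorted_second(1)[of xs] True xs_def by simp
    finally show ?thesis using t0 by simp
  next
    case False
    have "card {k. k < nn \<and> \<mu> k > t^2} \<le> card {..<nn}" by (intro card_mono) auto
    thus ?thesis using False unfolding t_def sigma2_def sv by simp
  qed
  obtain i where i: "i < nn" "ee i = a" using bij uS(1) by (metis bij_betw_imp_surj_on imageE lessThan_iff)
  have unz: "\<exists>i<nn. u (ee i) \<noteq> 0" using i uS by auto
  have uq: "dotn nn (\<lambda>i. u (ee i)) (mvn nn Cn (\<lambda>i. u (ee i))) = dotn nn (\<lambda>i. u (ee i)) (\<lambda>i. u (ee i))"
    by (metis hu quadS sdot_n)
  have "\<forall>x. sdot S x u = 0 \<longrightarrow> sdot S (smv S M x) (smv S M x) \<le> t^2 * sdot S x x"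
  proof (intro allI impI)
    fix x assume "sdot S x u = 0"
    hence xu: "dotn nn (\<lambda>i. x (ee i)) (\<lambda>i. u (ee i)) = 0" unfolding sdot_n .
    show "sdot S (smv S M x) (smv S M x) \<le> t^2 * sdot S x x"
      unfolding quadS sdot_n[of x x]
      by (rule LOWn[OF symCn ev o le1 unz uq _ _ xu]) (use tc in auto)
  qed
  thus ?thesis using tc unfolding t_def by simp
qed

end




section \<open>Counting and rotation maps\<close>

lemma sum_card_fiber:
  assumes "finite S" "finite J" "\<forall>j\<in>J. g j \<in> S"
  shows "(\<Sum>u\<in>S. real (card {j\<in>J. g j = u}) * h u) = (\<Sum>j\<in>J. h (g j))"
proof -
  have "(\<Sum>u\<in>S. real (card {j\<in>J. g j = u}) * h u) = (\<Sum>u\<in>S. \<Sum>j\<in>J. if g j = u then h u else 0)"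
  proof (intro sum.cong refl)
    fix u assume "u \<in> S"
    have "real (card {j\<in>J. g j = u}) = (\<Sum>j\<in>{j\<in>J. g j = u}. 1)" by simp
    also have "\<dots> = (\<Sum>j\<in>J. if g j = u then 1 else 0)" by (rule sum.inter_filter[OF assms(2)])
    finally have "real (card {j\<in>J. g j = u}) = (\<Sum>j\<in>J. if g j = u then 1 else 0)" .
    hence "real (card {j\<in>J. g j = u}) * h u = (\<Sum>j\<in>J. (if g j = u then 1 else 0) * h u)"
      by (simp add: sum_distrib_right)
    also have "\<dots> = (\<Sum>j\<in>J. if g j = u then h u else 0)" by (intro sum.cong) auto
    finally show "real (card {j\<in>J. g j = u}) * h u = (\<Sum>j\<in>J. if g j = u then h u else 0)" .
  qed
  also have "\<dots> = (\<Sum>j\<in>J. \<Sum>u\<in>S. if g j = u then h u else 0)" by (rule sum.swap)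
  also have "\<dots> = (\<Sum>j\<in>J. h (g j))"
    using assms by (intro sum.cong refl) (auto simp: sum.delta' if_distrib cong: if_cong)
  finally show ?thesis .
qed

lemma rot_back:
  "is_rotation_map S d rot \<Longrightarrow> v \<in> S \<Longrightarrow> a < d \<Longrightarrow>
    rot (fst (rot v a)) (snd (rot v a)) = (v, a) \<and> snd (rot v a) < d \<and> fst (rot v a) \<in> S"
  unfolding is_rotation_map_def by blast

lemma rot_card_sym:
  assumes R: "is_rotation_map S d rot" and u: "u \<in> S" and v: "v \<in> S"
  shows "card {j. j < d \<and> fst (rot v j) = u} = card {k. k < d \<and> fst (rot u k) = v}"
proof -
  have one: "snd (rot u (snd (rot v a))) = a \<and> snd (rot v a) < d \<and> fst (rot u (snd (rot v a))) = v"
    if v: "v \<in> S" and a: "a < d" "fst (rot v a) = u" for a u v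
  proof -
    have "rot (fst (rot v a)) (snd (rot v a)) = (v, a)" "snd (rot v a) < d"
      using rot_back[OF R v a(1)] by auto
    thus ?thesis using a(2) by simp
  qed
  show ?thesis
  proof (rule bij_betw_same_card[of "\<lambda>j. snd (rot v j)"], rule bij_betw_byWitness[of _ "\<lambda>k. snd (rot u k)"])
    show "\<forall>a\<in>{j. j < d \<and> fst (rot v j) = u}. snd (rot u (snd (rot v a))) = a"
      using one[OF v] by blast
    show "\<forall>a\<in>{k. k < d \<and> fst (rot u k) = v}. snd (rot v (snd (rot u a))) = a"
      using one[OF u] by blast
    show "(\<lambda>j. snd (rot v j)) ` {j. j < d \<and> fst (rot v j) = u} \<subseteq> {k. k < d \<and> fst (rot u k) = v}"
      using one[OF v] by blast
    show "(\<lambda>k. snd (rot u k)) ` {k. k < d \<and> fst (rot u k) = v} \<subseteq> {j. j < d \<and> fst (rot v j) = u}"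
      using one[OF u] by blast
  qed
qed

lemma norm_adj_sym:
  "is_rotation_map S d rot \<Longrightarrow> u \<in> S \<Longrightarrow> v \<in> S \<Longrightarrow> norm_adj d rot u v = norm_adj d rot v u"
  unfolding norm_adj_def using rot_card_sym[of S d rot u v] by simp

lemma norm_adj_nonneg: "norm_adj d rot u v \<ge> 0"
  unfolding norm_adj_def by simp

lemma norm_adj_colsum:
  assumes R: "is_rotation_map S d rot" and fin: "finite S" and d: "d \<ge> 1" and v: "v \<in> S"
  shows "(\<Sum>u\<in>S. norm_adj d rot u v * h u) = (\<Sum>j<d. h (fst (rot v j))) / real d"
proof -
  have "(\<Sum>u\<in>S. norm_adj d rot u v * h u) = (\<Sum>u\<in>S. real (card {j\<in>{..<d}. fst (rot v j) = u}) * h u) / real d"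
    unfolding norm_adj_def by (simp add: sum_divide_distrib)
  also have "\<dots> = (\<Sum>j<d. h (fst (rot v j))) / real d"
    using R v unfolding is_rotation_map_def by (subst sum_card_fiber[OF fin]) auto
  finally show ?thesis .
qed

lemma norm_adj_colsum1:
  assumes R: "is_rotation_map S d rot" and fin: "finite S" and d: "d \<ge> 1" and v: "v \<in> S"
  shows "(\<Sum>u\<in>S. norm_adj d rot u v) = 1"
  using norm_adj_colsum[OF assms, of "\<lambda>_. 1"] d by simp

lemma norm_adj_rowsum1:
  assumes R: "is_rotation_map S d rot" and fin: "finite S" and d: "d \<ge> 1" and u: "u \<in> S"
  shows "(\<Sum>v\<in>S. norm_adj d rot u v) = 1"
proof -
  have "(\<Sum>v\<in>S. norm_adj d rot u v) = (\<Sum>v\<in>S. norm_adj d rot v u)"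
    using norm_adj_sym[OF R] u by (intro sum.cong) auto
  thus ?thesis using norm_adj_colsum1[OF assms] by simp
qed

section \<open>Doubly stochastic kernels\<close>

lemma jensen_w:
  fixes w y :: "'b \<Rightarrow> real"
  assumes fin: "finite B" and w: "\<forall>b\<in>B. w b \<ge> 0" and s: "(\<Sum>b\<in>B. w b) = 1"
  shows "(\<Sum>b\<in>B. w b * y b)^2 \<le> (\<Sum>b\<in>B. w b * (y b)^2)"
proof -
  define m where "m = (\<Sum>b\<in>B. w b * y b)"
  have "0 \<le> (\<Sum>b\<in>B. w b * (y b - m)^2)" using w by (intro sum_nonneg) auto
  also have "\<dots> = (\<Sum>b\<in>B. w b * (y b)^2 - 2 * m * (w b * y b) + m^2 * w b)"
    by (intro sum.cong refl) (simp add: power2_diff algebra_simps)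
  also have "\<dots> = (\<Sum>b\<in>B. w b * (y b)^2) - 2 * m * (\<Sum>b\<in>B. w b * y b) + m^2 * (\<Sum>b\<in>B. w b)"
    by (simp only: sum.distrib sum_subtractf sum_distrib_left)
  also have "\<dots> = (\<Sum>b\<in>B. w b * (y b)^2) - m^2" using s unfolding m_def by (simp add: power2_eq_square)
  finally show ?thesis unfolding m_def by simp
qed

lemma stochastic_contract:
  assumes fin: "finite S" and nn: "\<forall>a\<in>S. \<forall>b\<in>S. W a b \<ge> 0"
    and row: "\<forall>a\<in>S. (\<Sum>b\<in>S. W a b) = 1" and col: "\<forall>b\<in>S. (\<Sum>a\<in>S. W a b) = 1"
  shows "sdot S (smv S W y) (smv S W y) \<le> sdot S y y"
proof -
  have "sdot S (smv S W y) (smv S W y) = (\<Sum>a\<in>S. (\<Sum>b\<in>S. W a b * y b)^2)"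
    unfolding sdot_def smv_def by (simp add: power2_eq_square)
  also have "\<dots> \<le> (\<Sum>a\<in>S. \<Sum>b\<in>S. W a b * (y b)^2)"
    using jensen_w[OF fin] nn row by (intro sum_mono) auto
  also have "\<dots> = (\<Sum>b\<in>S. (\<Sum>a\<in>S. W a b) * (y b)^2)"
    by (subst sum.swap) (simp add: sum_distrib_right)
  also have "\<dots> = sdot S y y" unfolding sdot_def using col by (simp add: power2_eq_square)
  finally show ?thesis .
qed

lemma stochastic_one:
  assumes "\<forall>a\<in>S. (\<Sum>b\<in>S. W a b) = 1" "a \<in> S"
  shows "smv S W (\<lambda>_. 1) a = 1"
  using assms unfolding smv_def by simp

lemma sdot_cong: "(\<And>a. a \<in> S \<Longrightarrow> x a = x' a) \<Longrightarrow> (\<And>a. a \<in> S \<Longrightarrow> y a = y' a) \<Longrightarrow> sdot S x y = sdot S x' y'"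
  unfolding sdot_def by (intro sum.cong) auto

lemma smv_cong: "(\<And>a. a \<in> S \<Longrightarrow> x a = x' a) \<Longrightarrow> smv S W x = smv S W x'"
  unfolding smv_def by (intro ext sum.cong) auto

lemma graph_sigma2:
  assumes R: "is_rotation_map S d rot" and fin: "finite S" and d: "d \<ge> 1" and ne: "a0 \<in> S"
  shows "0 \<le> sigma2 S (norm_adj d rot) \<and> (\<forall>x. sdot S x (\<lambda>_. 1) = 0 \<longrightarrow>
     sdot S (smv S (norm_adj d rot) x) (smv S (norm_adj d rot) x) \<le> (sigma2 S (norm_adj d rot))^2 * sdot S x x)"
proof (rule sigma2_lower[OF fin ne])
  show "(1::real) \<noteq> 0" by simp
  show "\<forall>x. sdot S (smv S (norm_adj d rot) x) (smv S (norm_adj d rot) x) \<le> sdot S x x"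
    by (intro allI stochastic_contract[OF fin])
      (use norm_adj_nonneg norm_adj_rowsum1[OF R fin d] norm_adj_colsum1[OF R fin d] in auto)
  have "sdot S (smv S (norm_adj d rot) (\<lambda>_. 1)) (smv S (norm_adj d rot) (\<lambda>_. 1)) = sdot S (\<lambda>_. 1) (\<lambda>_. 1)"
    by (rule sdot_cong) (use stochastic_one[of S "norm_adj d rot"] norm_adj_rowsum1[OF R fin d] in auto)
  thus "sdot S (smv S (norm_adj d rot) (\<lambda>_. 1)) (smv S (norm_adj d rot) (\<lambda>_. 1)) = sdot S (\<lambda>_. 1) (\<lambda>_. 1)" .
qed

lemma tuples_finite: "finite (tuples d1 s)"
  unfolding tuples_def using finite_lists_length_eq[of "{..<d1}" s] by (simp add: conj_commute)

lemma tuples_card: "card (tuples d1 s) = d1 ^ s"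
  unfolding tuples_def using card_lists_length_eq[of "{..<d1}" s] by (simp add: conj_commute)

lemma tuples_ne: "replicate s 0 \<in> tuples d1 s" if "d1 \<ge> 1"
  using that unfolding tuples_def by auto

lemma tuples_Suc: "tuples d1 (Suc s) = (\<lambda>(j,b). j # b) ` ({..<d1} \<times> tuples d1 s)"
proof (rule Set.set_eqI)
  fix a
  show "a \<in> tuples d1 (Suc s) \<longleftrightarrow> a \<in> (\<lambda>(j,b). j # b) ` ({..<d1} \<times> tuples d1 s)"
  proof
    assume "a \<in> tuples d1 (Suc s)"
    then obtain j b where ab: "a = j # b" "j < d1" "b \<in> tuples d1 s" unfolding tuples_def
      by (cases a) auto
    thus "a \<in> (\<lambda>(j,b). j # b) ` ({..<d1} \<times> tuples d1 s)" by force
  next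
    assume "a \<in> (\<lambda>(j,b). j # b) ` ({..<d1} \<times> tuples d1 s)"
    thus "a \<in> tuples d1 (Suc s)" unfolding tuples_def by auto
  qed
qed

lemma tuples_count:
  assumes "i < s"
  shows "(\<Sum>b\<in>tuples d1 s. f (b ! i)) = real (d1 ^ (s - 1)) * (\<Sum>j<d1. f j)"
  using assms
proof (induction s arbitrary: i)
  case 0 thus ?case by simp
next
  case (Suc s)
  have inj: "inj_on (\<lambda>(j,b). j # b) ({..<d1} \<times> tuples d1 s)" by (auto simp: inj_on_def)
  have "(\<Sum>b\<in>tuples d1 (Suc s). f (b ! i)) = (\<Sum>(j,b)\<in>{..<d1} \<times> tuples d1 s. f ((j # b) ! i))"
    unfolding tuples_Suc by (subst sum.reindex[OF inj]) (simp add: case_prod_beta)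
  also have "\<dots> = (\<Sum>j<d1. \<Sum>b\<in>tuples d1 s. f ((j # b) ! i))"
    by (rule sum.cartesian_product[symmetric])
  also have "\<dots> = real (d1 ^ s) * (\<Sum>j<d1. f j)"
  proof (cases i)
    case 0
    thus ?thesis by (simp add: tuples_card sum_distrib_left)
  next
    case (Suc i')
    hence "i' < s" using Suc.prems by simp
    hence "(\<Sum>b\<in>tuples d1 s. f ((j # b) ! i)) = real (d1 ^ (s - 1)) * (\<Sum>j<d1. f j)" for j
      using Suc.IH[of i'] \<open>i = Suc i'\<close> by simp
    moreover have "real d1 * real (d1 ^ (s - 1)) = real (d1 ^ s)" using \<open>i' < s\<close>
      by (metis Suc_diff_1 gr_implies_not_zero neq0_conv of_nat_mult power_Suc)
    ultimately show ?thesis by (simp add: mult.assoc[symmetric])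
  qed
  finally show ?case by simp
qed

section \<open>Rotation on the product\<close>

lemma Rot_eq: "Rot_i rotG i (v, a) = (fst (rotG v (a ! i)), a[i := snd (rotG v (a ! i))])"
  unfolding Rot_i_def by (simp add: case_prod_beta Let_def)

context
  fixes n d1 s i :: nat and rotG :: "nat \<Rightarrow> nat \<Rightarrow> nat \<times> nat"
  assumes G: "is_rotation_map {..<n} d1 rotG" and i: "i < s"
begin

lemma Rot_in: "p \<in> {..<n} \<times> tuples d1 s \<Longrightarrow> Rot_i rotG i p \<in> {..<n} \<times> tuples d1 s"
proof -
  assume p: "p \<in> {..<n} \<times> tuples d1 s"
  obtain v a where pv: "p = (v, a)" by (cases p)
  have v: "v < n" and a: "length a = s" "set a \<subseteq> {..<d1}" using p pv unfolding tuples_def by auto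
  have ai: "a ! i < d1" using a i by (meson lessThan_iff nth_mem subsetD)
  have r: "snd (rotG v (a ! i)) < d1" "fst (rotG v (a ! i)) \<in> {..<n}"
    using rot_back[OF G _ ai] v by auto
  have "set (a[i := snd (rotG v (a ! i))]) \<subseteq> {..<d1}"
    using set_update_subset_insert[of a i "snd (rotG v (a ! i))"] a r by auto
  thus ?thesis unfolding pv Rot_eq tuples_def using r a by auto
qed

lemma Rot_inv: "p \<in> {..<n} \<times> tuples d1 s \<Longrightarrow> Rot_i rotG i (Rot_i rotG i p) = p"
proof -
  assume p: "p \<in> {..<n} \<times> tuples d1 s"
  obtain v a where pv: "p = (v, a)" by (cases p)
  have v: "v < n" and a: "length a = s" "set a \<subseteq> {..<d1}" using p pv unfolding tuples_def by auto
  have ai: "a ! i < d1" using a i by (meson lessThan_iff nth_mem subsetD)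
  have r: "rotG (fst (rotG v (a ! i))) (snd (rotG v (a ! i))) = (v, a ! i)"
    using G v ai unfolding is_rotation_map_def by auto
  show ?thesis unfolding pv Rot_eq using r a i by simp
qed

end




lemma mean_decomp:
  fixes w :: "'b \<Rightarrow> real"
  assumes fin: "finite T" and N: "card T > 0"
  defines "m \<equiv> (\<Sum>b\<in>T. w b) / real (card T)"
  shows "(\<Sum>b\<in>T. w b - m) = 0"
    and "sdot T w w = real (card T) * m^2 + sdot T (\<lambda>b. w b - m) (\<lambda>b. w b - m)"
proof -
  have sm: "(\<Sum>b\<in>T. w b) = real (card T) * m" unfolding m_def using N by simp
  show z: "(\<Sum>b\<in>T. w b - m) = 0" by (simp add: sum_subtractf sm)
  have "sdot T (\<lambda>b. w b - m) (\<lambda>b. w b - m) = (\<Sum>b\<in>T. w b * w b - 2 * m * w b + m^2)"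
    unfolding sdot_def by (intro sum.cong refl) (simp add: algebra_simps power2_eq_square)
  also have "\<dots> = sdot T w w - 2 * m * (\<Sum>b\<in>T. w b) + real (card T) * m^2"
    unfolding sdot_def by (simp add: sum.distrib sum_subtractf sum_distrib_left)
  also have "\<dots> = sdot T w w - real (card T) * m^2" unfolding sm by (simp add: power2_eq_square)
  finally show "sdot T w w = real (card T) * m^2 + sdot T (\<lambda>b. w b - m) (\<lambda>b. w b - m)" by simp
qed

lemma sum_prod_split: "(\<Sum>q\<in>A \<times> B. F q) = (\<Sum>w\<in>A. \<Sum>b\<in>B. F (w, b))"
  by (simp add: sum.cartesian_product)

lemma smv_mult: "smv S (mat_mult_on S A B) x = smv S A (smv S B x)"
  unfolding smv_def mat_mult_on_def
  by (auto simp: sum_distrib_left sum_distrib_right mult.assoc intro!: ext sum.swap)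

lemma sdot_prod: "sdot (A \<times> B) z w = (\<Sum>v\<in>A. sdot B (\<lambda>b. z (v, b)) (\<lambda>b. w (v, b)))"
  unfolding sdot_def by (simp add: sum.cartesian_product)

lemma sq_sum_le: "sdot S (\<lambda>p. f p + g p) (\<lambda>p. f p + g p) \<le> 2 * sdot S f f + 2 * sdot S g g"
proof -
  have "(f p + g p) * (f p + g p) \<le> 2 * (f p * f p) + 2 * (g p * g p)" for p
  proof -
    have "0 \<le> (f p - g p)^2" by simp
    thus ?thesis by (simp add: power2_eq_square algebra_simps)
  qed
  hence "sdot S (\<lambda>p. f p + g p) (\<lambda>p. f p + g p) \<le> (\<Sum>p\<in>S. 2 * (f p * f p) + 2 * (g p * g p))"
    unfolding sdot_def by (intro sum_mono) auto
  thus ?thesis unfolding sdot_def by (simp add: sum.distrib sum_distrib_left)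
qed

context
  fixes n d1 d2 s i :: nat
    and rotG :: "nat \<Rightarrow> nat \<Rightarrow> nat \<times> nat"
    and rotH :: "nat list \<Rightarrow> nat \<Rightarrow> nat list \<times> nat"
  assumes d1: "d1 \<ge> 1" and d2: "d2 \<ge> 1"
    and G: "is_rotation_map {..<n} d1 rotG"
    and H: "is_rotation_map (tuples d1 s) d2 rotH"
    and hyp: "sigma2 {..<n} (norm_adj d1 rotG) \<le> sigma2 (tuples d1 s) (norm_adj d2 rotH)"
    and i: "i < s"
begin

abbreviation "TT \<equiv> tuples d1 s"
abbreviation "VV \<equiv> {..<n} \<times> TT"
abbreviation "AH \<equiv> norm_adj d2 rotH"
abbreviation "AG \<equiv> norm_adj d1 rotG"
abbreviation "XX \<equiv> id_tensor AH"
abbreviation "PP \<equiv> perm_mat_Rot rotG i"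
abbreviation "Rt \<equiv> Rot_i rotG i"
abbreviation "sH \<equiv> sigma2 TT AH"
abbreviation "sG \<equiv> sigma2 {..<n} AG"
abbreviation "NN \<equiv> card TT"

lemma finT: "finite TT" by (rule tuples_finite)
lemma Npos: "NN > 0" using d1 by (simp add: tuples_card)
lemma finV: "finite VV" using finT by simp

lemma Hfacts: "0 \<le> sH" "sdot TT w (\<lambda>_. 1) = 0 \<Longrightarrow>
   sdot TT (smv TT AH w) (smv TT AH w) \<le> sH^2 * sdot TT w w"
  using graph_sigma2[OF H finT d2 tuples_ne[OF d1]] by auto

lemma rowH: "a \<in> TT \<Longrightarrow> (\<Sum>b\<in>TT. AH a b) = 1"
  by (rule norm_adj_rowsum1[OF H finT d2])

lemma colH: "(\<Sum>a\<in>TT. smv TT AH w a) = (\<Sum>b\<in>TT. w b)"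
proof -
  have "(\<Sum>a\<in>TT. smv TT AH w a) = (\<Sum>b\<in>TT. (\<Sum>a\<in>TT. AH a b) * w b)"
    unfolding smv_def by (subst sum.swap) (simp add: sum_distrib_right)
  also have "\<dots> = (\<Sum>b\<in>TT. w b)" using norm_adj_colsum1[OF H finT d2] by simp
  finally show ?thesis .
qed

lemma H2: "sdot TT (smv TT AH w) (smv TT AH w) \<le> sdot TT w w"
  by (rule stochastic_contract[OF finT])
    (use norm_adj_nonneg rowH norm_adj_colsum1[OF H finT d2] in auto)

lemma SI: "sdot TT (smv TT AH w) (smv TT AH w)
   \<le> NN * ((\<Sum>b\<in>TT. w b) / NN)^2 + sH^2 * (sdot TT w w - NN * ((\<Sum>b\<in>TT. w b) / NN)^2)"
proof -
  define m where "m = (\<Sum>b\<in>TT. w b) / NN"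
  define r where "r b = w b - m" for b
  have r0: "(\<Sum>b\<in>TT. r b) = 0" unfolding r_def m_def by (rule mean_decomp(1)[OF finT Npos])
  have wr: "sdot TT w w = NN * m^2 + sdot TT r r" unfolding r_def m_def
    by (rule mean_decomp(2)[OF finT Npos])
  have Aw: "smv TT AH w a = m + smv TT AH r a" if a: "a \<in> TT" for a
  proof -
    have "smv TT AH w a = (\<Sum>b\<in>TT. AH a b * m + AH a b * r b)"
      unfolding smv_def r_def by (intro sum.cong) (auto simp: algebra_simps)
    also have "\<dots> = m * (\<Sum>b\<in>TT. AH a b) + smv TT AH r a"
      unfolding smv_def by (simp add: sum.distrib sum_distrib_left mult.commute)
    finally show ?thesis using rowH[OF a] by simp
  qed
  have cr: "(\<Sum>a\<in>TT. smv TT AH r a) = 0" using colH r0 by simp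
  have "sdot TT (smv TT AH w) (smv TT AH w) = sdot TT (\<lambda>a. m + smv TT AH r a) (\<lambda>a. m + smv TT AH r a)"
    using Aw by (intro sdot_cong) auto
  also have "\<dots> = (\<Sum>a\<in>TT. m^2 + 2 * m * smv TT AH r a + smv TT AH r a * smv TT AH r a)"
    unfolding sdot_def by (intro sum.cong refl) (simp add: algebra_simps power2_eq_square)
  also have "\<dots> = NN * m^2 + 2 * m * (\<Sum>a\<in>TT. smv TT AH r a) + sdot TT (smv TT AH r) (smv TT AH r)"
    unfolding sdot_def by (simp add: sum.distrib sum_distrib_left)
  also have "\<dots> = NN * m^2 + sdot TT (smv TT AH r) (smv TT AH r)" using cr by simp
  also have "\<dots> \<le> NN * m^2 + sH^2 * sdot TT r r"
    using Hfacts(2)[of r] r0 unfolding sdot_def by simp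
  finally show ?thesis using wr unfolding m_def by simp
qed


lemma SLX: "v < n \<Longrightarrow> smv VV XX z (v, a) = smv (tuples d1 s) AH (\<lambda>b. z (v, b)) a"
proof -
  assume v: "v < n"
  have "smv VV XX z (v, a) = (\<Sum>w<n. \<Sum>b\<in>tuples d1 s. (if v = w then 1 else 0) * AH a b * z (w, b))"
    unfolding smv_def id_tensor_def sum_prod_split by simp
  also have "\<dots> = (\<Sum>w<n. if w = v then (\<Sum>b\<in>tuples d1 s. AH a b * z (v, b)) else 0)"
    by (intro sum.cong refl) auto
  also have "\<dots> = smv (tuples d1 s) AH (\<lambda>b. z (v, b)) a" using v unfolding smv_def by (simp add: sum.delta)
  finally show ?thesis .
qed

lemma normX: "sdot VV (smv VV XX z) (smv VV XX z) =
   (\<Sum>v<n. sdot (tuples d1 s) (smv (tuples d1 s) AH (\<lambda>b. z (v, b))) (smv (tuples d1 s) AH (\<lambda>b. z (v, b))))"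
  unfolding sdot_prod using SLX by (intro sum.cong refl sdot_cong) auto

lemma Xcontract: "sdot VV (smv VV XX z) (smv VV XX z) \<le> sdot VV z z"
  by (subst normX, subst sdot_prod) (intro sum_mono H2)

lemma PPapp: "p \<in> VV \<Longrightarrow> smv VV PP w p = w (Rt p)"
proof -
  assume p: "p \<in> VV"
  have "smv VV PP w p = (\<Sum>q\<in>VV. if q = Rt p then w q else 0)"
    unfolding smv_def perm_mat_Rot_def
  proof (intro sum.cong refl)
    fix q assume q: "q \<in> VV"
    have "(p = Rt q) = (q = Rt p)" using Rot_inv[OF G i] p q by metis
    thus "(if p = Rt q then 1 else 0) * w q = (if q = Rt p then w q else 0)" by simp
  qed
  also have "\<dots> = w (Rt p)" using Rot_in[OF G i p] finV by (simp add: sum.delta')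
  finally show ?thesis .
qed

lemma Rt_bij: "bij_betw Rt VV VV"
proof (rule bij_betw_byWitness[of _ Rt])
  show "\<forall>a\<in>VV. Rt (Rt a) = a" using Rot_inv[OF G i] by blast
  show "\<forall>a\<in>VV. Rt (Rt a) = a" using Rot_inv[OF G i] by blast
  show "Rt ` VV \<subseteq> VV" using Rot_in[OF G i] by blast
  show "Rt ` VV \<subseteq> VV" using Rot_in[OF G i] by blast
qed

lemma Piso: "sdot VV (smv VV PP w) (smv VV PP w) = sdot VV w w"
proof -
  have "sdot VV (smv VV PP w) (smv VV PP w) = (\<Sum>p\<in>VV. w (Rt p) * w (Rt p))"
    unfolding sdot_def using PPapp by (intro sum.cong) auto
  also have "\<dots> = sdot VV w w" unfolding sdot_def
    by (rule sum.reindex_bij_betw[OF Rt_bij, of "\<lambda>p. w p * w p"])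
  finally show ?thesis .
qed


lemma smv_add: "smv S W (\<lambda>p. f p + g p) = (\<lambda>a. smv S W f a + smv S W g a)"
  unfolding smv_def by (auto simp: algebra_simps sum.distrib intro!: ext)

lemma main_bound:
  assumes x0: "sdot VV x (\<lambda>_. 1) = 0"
  shows "sdot VV (smv VV (mat_mult_on VV (mat_mult_on VV XX PP) XX) x)
                 (smv VV (mat_mult_on VV (mat_mult_on VV XX PP) XX) x) \<le> (4 * sH^2) * sdot VV x x"
proof (cases "n = 0")
  case True thus ?thesis by (simp add: sdot_def)
next
  case False
  have Gf: "0 \<le> sG" "\<And>y. sdot {..<n} y (\<lambda>_. 1) = 0 \<Longrightarrow>
     sdot {..<n} (smv {..<n} AG y) (smv {..<n} AG y) \<le> sG^2 * sdot {..<n} y y"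
    using graph_sigma2[OF G _ d1, of 0] False by auto
  have sGH: "sG^2 \<le> sH^2" using Gf(1) hyp by (intro power_mono) auto
  define y where "y v = (\<Sum>b\<in>TT. x (v, b)) / NN" for v
  define x1 where "x1 p = y (fst p)" for p :: "nat \<times> nat list"
  define x2 where "x2 p = x p - x1 p" for p
  have slice_mean: "(\<Sum>b\<in>TT. x (v, b) - y v) = 0" for v
    unfolding y_def by (rule mean_decomp(1)[OF finT Npos])
  have C1: "sdot VV x x = sdot VV x1 x1 + sdot VV x2 x2"
  proof -
    have "sdot VV x x = (\<Sum>v<n. NN * (y v)^2 + sdot TT (\<lambda>b. x2 (v, b)) (\<lambda>b. x2 (v, b)))"
      unfolding sdot_prod x2_def x1_def y_def
      by (intro sum.cong refl) (simp only: fst_conv, rule mean_decomp(2)[OF finT Npos])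
    also have "\<dots> = (\<Sum>v<n. sdot TT (\<lambda>b. x1 (v, b)) (\<lambda>b. x1 (v, b))) + sdot VV x2 x2"
      unfolding sdot_prod by (simp add: sum.distrib sdot_def x1_def power2_eq_square)
    also have "(\<Sum>v<n. sdot TT (\<lambda>b. x1 (v, b)) (\<lambda>b. x1 (v, b))) = sdot VV x1 x1"
      unfolding sdot_prod ..
    finally show ?thesis .
  qed
  have x1n: "sdot VV x1 x1 = NN * sdot {..<n} y y"
    unfolding sdot_prod by (simp add: sdot_def x1_def sum_distrib_left)
  have C2: "sdot {..<n} y (\<lambda>_. 1) = 0"
  proof -
    have "sdot VV x (\<lambda>_. 1) = (\<Sum>v<n. NN * y v)" unfolding sdot_prod
      using Npos by (simp add: sdot_def y_def)
    thus ?thesis using x0 Npos by (simp add: sdot_def sum_distrib_left[symmetric])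
  qed
  have C3: "sdot VV (smv VV XX x2) (smv VV XX x2) \<le> sH^2 * sdot VV x2 x2"
  proof -
    have "sdot VV (smv VV XX x2) (smv VV XX x2) \<le> (\<Sum>v<n. sH^2 * sdot TT (\<lambda>b. x2 (v, b)) (\<lambda>b. x2 (v, b)))"
      unfolding normX
    proof (intro sum_mono Hfacts(2))
      fix v show "sdot TT (\<lambda>b. x2 (v, b)) (\<lambda>_. 1) = 0"
        using slice_mean[of v] by (simp add: sdot_def x2_def x1_def)
    qed
    thus ?thesis by (simp add: sdot_prod sum_distrib_left)
  qed
  have C4: "smv VV XX x p = x1 p + smv VV XX x2 p" if p: "p \<in> VV" for p
  proof -
    obtain v a where pv: "p = (v, a)" and v: "v < n" and a: "a \<in> TT" using p by auto
    have "smv TT AH (\<lambda>b. x (v, b)) a = (\<Sum>b\<in>TT. AH a b * y v + AH a b * x2 (v, b))"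
      unfolding smv_def x2_def x1_def by (intro sum.cong) (auto simp: algebra_simps)
    also have "\<dots> = y v * (\<Sum>b\<in>TT. AH a b) + smv TT AH (\<lambda>b. x2 (v, b)) a"
      unfolding smv_def by (simp add: sum.distrib sum_distrib_left mult.commute)
    finally show ?thesis unfolding pv SLX[OF v] using rowH[OF a] by (simp add: x1_def)
  qed
  have C5: "smv VV PP (smv VV XX x) p = smv VV PP x1 p + smv VV PP (smv VV XX x2) p" if p: "p \<in> VV" for p
    using PPapp p C4[OF Rot_in[OF G i p]] by simp
  have C6: "smv VV (mat_mult_on VV (mat_mult_on VV XX PP) XX) x =
      (\<lambda>a. smv VV XX (smv VV PP x1) a + smv VV XX (smv VV PP (smv VV XX x2)) a)"
  proof -
    have "smv VV (mat_mult_on VV (mat_mult_on VV XX PP) XX) x = smv VV XX (smv VV PP (smv VV XX x))"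
      by (simp add: smv_mult)
    also have "\<dots> = smv VV XX (\<lambda>p. smv VV PP x1 p + smv VV PP (smv VV XX x2) p)"
      by (rule smv_cong) (rule C5)
    also have "\<dots> = (\<lambda>a. smv VV XX (smv VV PP x1) a + smv VV XX (smv VV PP (smv VV XX x2)) a)"
      by (rule smv_add)
    finally show ?thesis .
  qed
  have C8: "sdot VV (smv VV XX (smv VV PP (smv VV XX x2))) (smv VV XX (smv VV PP (smv VV XX x2)))
      \<le> sH^2 * sdot VV x2 x2"
  proof -
    have "sdot VV (smv VV XX (smv VV PP (smv VV XX x2))) (smv VV XX (smv VV PP (smv VV XX x2)))
        \<le> sdot VV (smv VV PP (smv VV XX x2)) (smv VV PP (smv VV XX x2))" by (rule Xcontract)
    also have "\<dots> = sdot VV (smv VV XX x2) (smv VV XX x2)" by (rule Piso)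
    also have "\<dots> \<le> sH^2 * sdot VV x2 x2" by (rule C3)
    finally show ?thesis .
  qed
  define z where "z = smv VV PP x1"
  have zval: "z (v, b) = y (fst (rotG v (b ! i)))" if "v < n" "b \<in> TT" for v b
    unfolding z_def using PPapp[of "(v, b)"] that by (simp add: x1_def Rot_eq)
  have mv: "(\<Sum>b\<in>TT. z (v, b)) / NN = smv {..<n} AG y v" if v: "v < n" for v
  proof -
    have "(\<Sum>b\<in>TT. z (v, b)) = (\<Sum>b\<in>TT. y (fst (rotG v (b ! i))))"
      using zval v by (intro sum.cong) auto
    also have "\<dots> = real (d1 ^ (s - 1)) * (\<Sum>j<d1. y (fst (rotG v j)))"
      by (rule tuples_count[OF i])
    finally have e1: "(\<Sum>b\<in>TT. z (v, b)) / NN = (\<Sum>j<d1. y (fst (rotG v j))) / d1"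
    proof -
      assume e: "(\<Sum>b\<in>TT. z (v, b)) = real (d1 ^ (s - 1)) * (\<Sum>j<d1. y (fst (rotG v j)))"
      have "real NN = real d1 * real (d1 ^ (s - 1))" using i
        by (simp add: tuples_card power_Suc[symmetric] del: power_Suc)
      thus ?thesis using e d1 by (simp add: field_simps)
    qed
    have "smv {..<n} AG y v = (\<Sum>u\<in>{..<n}. AG u v * y u)" unfolding smv_def
      using norm_adj_sym[OF G] v by (intro sum.cong) auto
    also have "\<dots> = (\<Sum>j<d1. y (fst (rotG v j))) / d1"
      by (rule norm_adj_colsum[OF G _ d1]) (use v in auto)
    finally show ?thesis using e1 by simp
  qed
  have C9: "sdot VV (smv VV XX z) (smv VV XX z) \<le> 2 * sH^2 * sdot VV x1 x1"
  proof -
    define m where "m v = (\<Sum>b\<in>TT. z (v, b)) / NN" for v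
    have "sdot VV (smv VV XX z) (smv VV XX z)
       \<le> (\<Sum>v<n. NN * (m v)^2 + sH^2 * (sdot TT (\<lambda>b. z (v, b)) (\<lambda>b. z (v, b)) - NN * (m v)^2))"
      unfolding normX m_def by (intro sum_mono SI)
    also have "\<dots> \<le> (\<Sum>v<n. NN * (m v)^2 + sH^2 * sdot TT (\<lambda>b. z (v, b)) (\<lambda>b. z (v, b)))"
    proof (intro sum_mono)
      fix v
      have "0 \<le> sH^2 * (NN * (m v)^2)" by simp
      thus "NN * (m v)^2 + sH^2 * (sdot TT (\<lambda>b. z (v, b)) (\<lambda>b. z (v, b)) - NN * (m v)^2)
         \<le> NN * (m v)^2 + sH^2 * sdot TT (\<lambda>b. z (v, b)) (\<lambda>b. z (v, b))"
        by (simp add: right_diff_distrib)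
    qed
    also have "\<dots> = NN * sdot {..<n} (smv {..<n} AG y) (smv {..<n} AG y) + sH^2 * sdot VV z z"
      unfolding sdot_prod using mv by (simp add: sum.distrib sum_distrib_left sdot_def m_def power2_eq_square)
    also have "sdot VV z z = sdot VV x1 x1" unfolding z_def by (rule Piso)
    also have "NN * sdot {..<n} (smv {..<n} AG y) (smv {..<n} AG y) \<le> NN * (sG^2 * sdot {..<n} y y)"
      using Gf(2)[OF C2] by (intro mult_left_mono) auto
    also have "\<dots> \<le> NN * (sH^2 * sdot {..<n} y y)"
    proof (intro mult_left_mono mult_right_mono sGH)
      show "0 \<le> sdot {..<n} y y" by (simp add: sdot_def sum_nonneg)
    qed simp
    also have "NN * (sH^2 * sdot {..<n} y y) = sH^2 * sdot VV x1 x1" using x1n by simp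
    finally show ?thesis by (simp add: algebra_simps)
  qed
  have "sdot VV (smv VV (mat_mult_on VV (mat_mult_on VV XX PP) XX) x)
                 (smv VV (mat_mult_on VV (mat_mult_on VV XX PP) XX) x)
     \<le> 2 * sdot VV (smv VV XX z) (smv VV XX z)
       + 2 * sdot VV (smv VV XX (smv VV PP (smv VV XX x2))) (smv VV XX (smv VV PP (smv VV XX x2)))"
    unfolding C6 z_def by (rule sq_sum_le)
  also have "\<dots> \<le> 2 * (2 * sH^2 * sdot VV x1 x1) + 2 * (sH^2 * sdot VV x2 x2)"
    using C8 C9 by linarith
  also have "\<dots> \<le> 4 * sH^2 * (sdot VV x1 x1 + sdot VV x2 x2)"
  proof -
    have "0 \<le> sH^2 * sdot VV x2 x2" by (simp add: sdot_def sum_nonneg)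
    thus ?thesis by (simp add: algebra_simps)
  qed
  finally show ?thesis using C1 by simp
qed

lemma final: "sigma2 VV (mat_mult_on VV (mat_mult_on VV XX PP) XX) \<le> 2 * sH"
proof -
  have "sigma2 VV (mat_mult_on VV (mat_mult_on VV XX PP) XX) \<le> sqrt (4 * sH^2)"
    by (rule sigma2_upper[OF finV, of "4 * sH^2" "\<lambda>_. 1"]) (use main_bound in auto)
  also have "sqrt (4 * sH^2) = 2 * sH" using Hfacts(1) by (simp add: real_sqrt_mult)
  finally show ?thesis .
qed

end


theorem mainTheorem9:
  fixes n d1 d2 s :: nat
    and rotG :: "nat \<Rightarrow> nat \<Rightarrow> nat \<times> nat"
    and rotH :: "nat list \<Rightarrow> nat \<Rightarrow> nat list \<times> nat"
  assumes "d1 \<ge> 1" and "d2 \<ge> 1"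
    and G: "is_rotation_map {..<n} d1 rotG" "locally_invertible {..<n} d1 rotG"
    and H: "is_rotation_map (tuples d1 s) d2 rotH"
    and hyp: "sigma2 {..<n} (norm_adj d1 rotG) \<le> sigma2 (tuples d1 s) (norm_adj d2 rotH)"
    and i: "i < s"
  shows "sigma2 ({..<n} \<times> tuples d1 s)
           (mat_mult_on ({..<n} \<times> tuples d1 s)
              (mat_mult_on ({..<n} \<times> tuples d1 s) (id_tensor (norm_adj d2 rotH)) (perm_mat_Rot rotG i))
              (id_tensor (norm_adj d2 rotH)))
         \<le> 2 * sigma2 (tuples d1 s) (norm_adj d2 rotH)"
    by (rule final[OF assms(1,2) G(1) H hyp i])

end
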